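(* Let $r:s_1\ldots s_n\to\mathsf{Fact}$ be a fact constructor, let $Q$ be a query, and let $\vec x=x_1,\dots,x_n$ be distinct variables with $x_i$ of sort $s_i$ and $\{\vec x\}\cap\mathrm{Var}(Q)=\emptyset$. Then there exists a condition $\varphi^{\vec x\mid r}_Q$ such that for all ground finite multisets of facts $F$ and all ground substitutions $\sigma=\{\vec t/\vec x,\vec a/\vec v\}$ for which $\{\vec a/\vec v\}(Q)$ is closed, the condition $\sigma(\varphi^{\vec x\mid r}_Q)$ is closed, and $\mathrm{Init}_{\sigma(\varphi^{\vec x\mid r}_Q)}(F)\to^!\mathrm{Sat}(\mathsf{true})$ iff there is $F'$ with $\mathrm{Init}_{\{\vec a/\vec v\}(Q)}(F)\to^!\mathrm{Ans}(F'\circ r(\vec t))$, and $\mathrm{Init}_{\sigma(\varphi^{\vec x\mid r}_Q)}(F)\to^!\mathrm{Sat}(\mathsf{false})$ iff there is $F'$ with $r(\vec t)\notin F'$ and $\mathrm{Init}_{\{\vec a/\vec v\}(Q)}(F)\to^!\mathrm{Ans}(F')$. Moreover, if $Q$ is deterministic, then so is $\varphi^{\vec x\mid r}_Q$.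
   Context: Setting. Fix an order-sorted signature $\Sigma$ with sorts $\mathsf{Fact}$, $\mathsf{Bool}$ and a $\Sigma$-algebra of facts $\mathcal{D}$ presented by structural axioms $A$ and confluent terminating equations, providing Boolean connectives and Boolean-valued equality on every sort; every ground $\mathsf{Bool}$ term reduces to $\mathsf{true}$ or $\mathsf{false}$. Multisets of facts: associative commutative $\circ$ with identity $\emptyset$. A terminating and preserving pattern $P$ is $[F_1]_!\circ[F_2]_?$ or $[F_2]_?$ ($F_1,F_2$ non-empty, possibly non-ground, multisets of facts); $P_!,P_?$ are the wrapped multisets ($P_!=\emptyset$ if absent). Conditions: $\mathrm{False}$, $\{B\}$, $\neg\psi$, $\psi_1\vee\psi_2$, $\exists P.\psi$ (binding in $\psi$ the variables of $P$ not bound by the context). Condition-evaluation stacks consist of frames $\mathrm{Res}(B)$, $\mathrm{Not}$, $[\vec a]^{\vec v}_\psi$, $[\vec a]^{\vec v,\downarrow}_\psi$, $[F'\mid\vec a]^{\vec v}_{\exists P.\psi}$ ($\sigma=\{\vec a/\vec v\}$); rules ("$X\mapsto Y$" meaning $\{F,S\,X\}^c\to\{F,S\,Y\}^c$, $F$ the database): $[\vec a]_{\mathrm{False}}\mapsto\mathrm{Res}(\mathsf{false})$; $[\vec a]_{\{B\}}\mapsto\mathrm{Res}(\sigma(B))$; $[\vec a]_{\neg\psi}\mapsto\mathrm{Not}[\vec a]_\psi$; $\mathrm{Not}\,\mathrm{Res}(B)\mapsto\mathrm{Res}(\neg B)$; $[\vec a]_{\psi_1\vee\psi_2}\mapsto[\vec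 a]^\downarrow_{\psi_1}[\vec a]_{\psi_2}$; $[\vec a]^\downarrow_\psi\mathrm{Res}(\mathsf{true})\mapsto\mathrm{Res}(\mathsf{true})$; $[\vec a]^\downarrow_\psi\mathrm{Res}(\mathsf{false})\mapsto[\vec a]_\psi$; $[\vec a]_{\exists P.\psi}\mapsto[F\mid\vec a]_{\exists P.\psi}$; if $\vec w$ lists the variables of $P$ not in $\vec v$, $\sigma'=\{\vec a/\vec v,\vec b/\vec w\}$, $F'=F''\circ\sigma'(P_!\circ P_?)$: $[F'\mid\vec a]_{\exists P.\psi}\mapsto[F''\circ\sigma'(P_!)\mid\vec a]_{\exists P.\psi}[\vec a,\vec b]^{\vec v,\vec w}_\psi$; $[F'\mid\vec a]_{\exists P.\psi}\mathrm{Res}(\mathsf{false})\mapsto[F'\mid\vec a]_{\exists P.\psi}$; $[F'\mid\vec a]_{\exists P.\psi}\mathrm{Res}(\mathsf{true})\mapsto\mathrm{Res}(\mathsf{true})$; if no matching exists, $[F'\mid\vec a]_{\exists P.\psi}\mapsto\mathrm{Res}(\mathsf{false})$; finally $\{F,\mathrm{Res}(B)\}^c\to\mathrm{Sat}(B)$. $\mathrm{Init}_\varphi(F):=\{F,[\,]_\varphi\}^c$. Queries: $\emptyset$; facts $f$; $Q_1\oplus Q_2$; $\varphi\Rightarrow Q$; $\mathrm{From}\,P.Q$ ($P$ terminating and preserving, binding like $\exists$). Query system: states $\{F,F',S\}^q$, terminal $\mathrm{Ans}(F')$; with "$X\mapsto Y$" meaning $\{F,F',S\,X\}^q\to\{F,F',S\,Y\}^q$: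 $\{F,F',S[\vec a]_f\}^q\to\{F,F'\circ\sigma(f),S\}^q$; $[\vec a]_\emptyset\mapsto$ (nothing); $[\vec a]_{R_1\oplus R_2}\mapsto[\vec a]_{R_2}[\vec a]_{R_1}$; $[\vec a]_{\varphi\Rightarrow R}\mapsto[\vec a\mid[\vec a]^{\vec v}_\varphi]_R$; $[\vec a\mid\mathrm{Res}(\mathsf{false})]_R\mapsto$ (nothing); $[\vec a\mid\mathrm{Res}(\mathsf{true})]_R\mapsto[\vec a]_R$; for each condition rule $\{F,S'\}^c\to\{F,S''\}^c$, $[\vec a\mid S']_R\mapsto[\vec a\mid S'']_R$; $[\vec a]_{\mathrm{From}\,P.R}\mapsto[F\mid\vec a]_{\mathrm{From}\,P.R}$; if $F''=H\circ\sigma'(P_!\circ P_?)$ then $[F''\mid\vec a]_{\mathrm{From}\,P.R}\mapsto[H\circ\sigma'(P_!)\mid\vec a]_{\mathrm{From}\,P.R}[\vec a,\vec b]^{\vec v,\vec w}_R$; if no matching exists, $[F''\mid\vec a]_{\mathrm{From}\,P.R}\mapsto$ (nothing); $\{F,F',\text{empty}\}^q\to\mathrm{Ans}(F')$. $\mathrm{Init}_Q(F):=\{F,\emptyset,[\,]_Q\}^q$. $t\to^!t'$ means $t\to^*t'$ with $t'$ irreducible. $\mathrm{Var}(t)$ is the set of variables of $t$; a condition/query is closed if all its variables are bound by enclosing patterns. A fully reduced fact term $t$ has the unique matching property if for every ground fully reduced fact $t'$ there is at most one substitution $\sigma$ with $\sigma(t)=t'$; a condition or query is deterministic if all its quantification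 patterns (including those inside conditions) consist of a single fact with the unique matching property. *)

theory Defs
  imports Main "HOL-Library.Multiset"
begin

datatype ('f,'v) trm = Var 'v | Fn 'f "('f,'v) trm list"

fun vars :: "('f,'v) trm \<Rightarrow> 'v set" where
  "vars (Var x) = {x}"
| "vars (Fn f ts) = (\<Union>t\<in>set ts. vars t)"

definition ground :: "('f,'v) trm \<Rightarrow> bool" where
  "ground t \<longleftrightarrow> vars t = {}"

type_synonym ('f,'v) sbst = "'v \<rightharpoonup> ('f,'v) trm"

fun subst :: "('f,'v) sbst \<Rightarrow> ('f,'v) trm \<Rightarrow> ('f,'v) trm" where
  "subst \<sigma> (Var x) = (case \<sigma> x of None \<Rightarrow> Var x | Some t \<Rightarrow> t)"
| "subst \<sigma> (Fn f ts) = Fn f (map (subst \<sigma>) ts)"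

text \<open>The fixed setting: order-sorted signature (subsort order, possibly overloaded
  ranks, sorts of variables), the sorts Fact and Bool, the Boolean connectives,
  Boolean-valued equality on every sort, and the algebra of facts D, represented by
  a canonical-form function (reduction to normal form modulo A).\<close>
record ('s,'f,'v) setting =
  leq :: "'s \<Rightarrow> 's \<Rightarrow> bool"
  ranks :: "'f \<Rightarrow> ('s list \<times> 's) set"
  vsort :: "'v \<Rightarrow> 's"
  sFact :: 's
  sBool :: 's
  tt :: 'f
  ff :: 'f
  neg :: 'f
  conj :: 'f
  disj :: 'f
  eqs :: "'s \<Rightarrow> 'f"
  canon :: "('f,'v) trm \<Rightarrow> ('f,'v) trm"

inductive has_sort :: "('s,'f,'v) setting \<Rightarrow> ('f,'v) trm \<Rightarrow> 's \<Rightarrow> bool" for \<Sigma> where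
  hs_var: "leq \<Sigma> (vsort \<Sigma> x) s \<Longrightarrow> has_sort \<Sigma> (Var x) s"
| hs_fn: "(ss, s0) \<in> ranks \<Sigma> f \<Longrightarrow> length ts = length ss \<Longrightarrow>
          (\<forall>i<length ts. has_sort \<Sigma> (ts ! i) (ss ! i)) \<Longrightarrow> leq \<Sigma> s0 s \<Longrightarrow>
          has_sort \<Sigma> (Fn f ts) s"

abbreviation TT :: "('s,'f,'v) setting \<Rightarrow> ('f,'v) trm" where "TT \<Sigma> \<equiv> Fn (tt \<Sigma>) []"
abbreviation FF :: "('s,'f,'v) setting \<Rightarrow> ('f,'v) trm" where "FF \<Sigma> \<equiv> Fn (ff \<Sigma>) []"

definition valid_setting :: "('s,'f,'v) setting \<Rightarrow> bool" where
  "valid_setting \<Sigma> \<longleftrightarrow>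
     (\<forall>s. leq \<Sigma> s s) \<and> (\<forall>s1 s2 s3. leq \<Sigma> s1 s2 \<longrightarrow> leq \<Sigma> s2 s3 \<longrightarrow> leq \<Sigma> s1 s3) \<and>
     (\<forall>s1 s2. leq \<Sigma> s1 s2 \<longrightarrow> leq \<Sigma> s2 s1 \<longrightarrow> s1 = s2) \<and>
     ([], sBool \<Sigma>) \<in> ranks \<Sigma> (tt \<Sigma>) \<and> ([], sBool \<Sigma>) \<in> ranks \<Sigma> (ff \<Sigma>) \<and>
     ([sBool \<Sigma>], sBool \<Sigma>) \<in> ranks \<Sigma> (neg \<Sigma>) \<and>
     ([sBool \<Sigma>, sBool \<Sigma>], sBool \<Sigma>) \<in> ranks \<Sigma> (conj \<Sigma>) \<and>
     ([sBool \<Sigma>, sBool \<Sigma>], sBool \<Sigma>) \<in> ranks \<Sigma> (disj \<Sigma>) \<and>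
     (\<forall>s. ([s, s], sBool \<Sigma>) \<in> ranks \<Sigma> (eqs \<Sigma> s)) \<and>
     tt \<Sigma> \<noteq> ff \<Sigma> \<and>
     \<comment> \<open>canonical forms of ground terms (the algebra D)\<close>
     (\<forall>t. ground t \<longrightarrow> ground (canon \<Sigma> t) \<and> canon \<Sigma> (canon \<Sigma> t) = canon \<Sigma> t) \<and>
     (\<forall>t s. ground t \<longrightarrow> has_sort \<Sigma> t s \<longrightarrow> has_sort \<Sigma> (canon \<Sigma> t) s) \<and>
     (\<forall>f ts. ground (Fn f ts) \<longrightarrow> canon \<Sigma> (Fn f ts) = canon \<Sigma> (Fn f (map (canon \<Sigma>) ts))) \<and>
     canon \<Sigma> (TT \<Sigma>) = TT \<Sigma> \<and> canon \<Sigma> (FF \<Sigma>) = FF \<Sigma> \<and>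
     \<comment> \<open>every ground Bool term reduces to true or false\<close>
     (\<forall>b. ground b \<longrightarrow> has_sort \<Sigma> b (sBool \<Sigma>) \<longrightarrow> canon \<Sigma> b = TT \<Sigma> \<or> canon \<Sigma> b = FF \<Sigma>) \<and>
     \<comment> \<open>Boolean connectives\<close>
     (\<forall>b. ground b \<longrightarrow> has_sort \<Sigma> b (sBool \<Sigma>) \<longrightarrow>
        (canon \<Sigma> (Fn (neg \<Sigma>) [b]) = TT \<Sigma> \<longleftrightarrow> canon \<Sigma> b = FF \<Sigma>)) \<and>
     (\<forall>a b. ground a \<longrightarrow> ground b \<longrightarrow> has_sort \<Sigma> a (sBool \<Sigma>) \<longrightarrow> has_sort \<Sigma> b (sBool \<Sigma>) \<longrightarrow>
        (canon \<Sigma> (Fn (conj \<Sigma>) [a, b]) = TT \<Sigma> \<longleftrightarrow> canon \<Sigma> a = TT \<Sigma> \<and> canon \<Sigma> b = TT \<Sigma>)) \<and>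
     (\<forall>a b. ground a \<longrightarrow> ground b \<longrightarrow> has_sort \<Sigma> a (sBool \<Sigma>) \<longrightarrow> has_sort \<Sigma> b (sBool \<Sigma>) \<longrightarrow>
        (canon \<Sigma> (Fn (disj \<Sigma>) [a, b]) = TT \<Sigma> \<longleftrightarrow> canon \<Sigma> a = TT \<Sigma> \<or> canon \<Sigma> b = TT \<Sigma>)) \<and>
     \<comment> \<open>Boolean-valued equality on every sort\<close>
     (\<forall>s a b. ground a \<longrightarrow> ground b \<longrightarrow> has_sort \<Sigma> a s \<longrightarrow> has_sort \<Sigma> b s \<longrightarrow>
        (canon \<Sigma> (Fn (eqs \<Sigma> s) [a, b]) = TT \<Sigma> \<longleftrightarrow> canon \<Sigma> a = canon \<Sigma> b))"

definition gsub :: "('s,'f,'v) setting \<Rightarrow> ('f,'v) sbst \<Rightarrow> 'v set \<Rightarrow> bool" where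
  "gsub \<Sigma> \<sigma> V \<longleftrightarrow> dom \<sigma> = V \<and>
     (\<forall>v b. \<sigma> v = Some b \<longrightarrow> ground b \<and> has_sort \<Sigma> b (vsort \<Sigma> v))"

definition db :: "('s,'f,'v) setting \<Rightarrow> ('f,'v) trm multiset \<Rightarrow> bool" where
  "db \<Sigma> F \<longleftrightarrow> (\<forall>f\<in>#F. ground f \<and> has_sort \<Sigma> f (sFact \<Sigma>) \<and> canon \<Sigma> f = f)"

text \<open>A pattern [F1]_! o [F2]_? (pbang = F1, empty if absent; pquery = F2).\<close>
datatype ('f,'v) pat = Pat (pbang: "('f,'v) trm multiset") (pquery: "('f,'v) trm multiset")

definition pvars :: "('f,'v) pat \<Rightarrow> 'v set" where
  "pvars P = (\<Union>t\<in>set_mset (pbang P + pquery P). vars t)"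

definition psubst :: "('f,'v) sbst \<Rightarrow> ('f,'v) pat \<Rightarrow> ('f,'v) pat" where
  "psubst \<sigma> P = Pat (image_mset (subst \<sigma>) (pbang P)) (image_mset (subst \<sigma>) (pquery P))"

definition wf_pat :: "('s,'f,'v) setting \<Rightarrow> ('f,'v) pat \<Rightarrow> bool" where
  "wf_pat \<Sigma> P \<longleftrightarrow> pquery P \<noteq> {#} \<and> (\<forall>t\<in>#pbang P + pquery P. has_sort \<Sigma> t (sFact \<Sigma>))"

datatype ('f,'v) cond = CFalse | CAtom "('f,'v) trm" | CNot "('f,'v) cond"
  | COr "('f,'v) cond" "('f,'v) cond" | CEx "('f,'v) pat" "('f,'v) cond"

datatype ('f,'v) query = QEmpty | QFact "('f,'v) trm" | QPlus "('f,'v) query" "('f,'v) query"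
  | QImp "('f,'v) cond" "('f,'v) query" | QFrom "('f,'v) pat" "('f,'v) query"

fun cvars :: "('f,'v) cond \<Rightarrow> 'v set" where
  "cvars CFalse = {}"
| "cvars (CAtom B) = vars B"
| "cvars (CNot \<psi>) = cvars \<psi>"
| "cvars (COr \<psi>1 \<psi>2) = cvars \<psi>1 \<union> cvars \<psi>2"
| "cvars (CEx P \<psi>) = pvars P \<union> cvars \<psi>"

fun qvars :: "('f,'v) query \<Rightarrow> 'v set" where
  "qvars QEmpty = {}"
| "qvars (QFact f) = vars f"
| "qvars (QPlus R1 R2) = qvars R1 \<union> qvars R2"
| "qvars (QImp \<phi> R) = cvars \<phi> \<union> qvars R"
| "qvars (QFrom P R) = pvars P \<union> qvars R"

fun csubst :: "('f,'v) sbst \<Rightarrow> ('f,'v) cond \<Rightarrow> ('f,'v) cond" where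
  "csubst \<sigma> CFalse = CFalse"
| "csubst \<sigma> (CAtom B) = CAtom (subst \<sigma> B)"
| "csubst \<sigma> (CNot \<psi>) = CNot (csubst \<sigma> \<psi>)"
| "csubst \<sigma> (COr \<psi>1 \<psi>2) = COr (csubst \<sigma> \<psi>1) (csubst \<sigma> \<psi>2)"
| "csubst \<sigma> (CEx P \<psi>) = CEx (psubst \<sigma> P) (csubst \<sigma> \<psi>)"

fun qsubst :: "('f,'v) sbst \<Rightarrow> ('f,'v) query \<Rightarrow> ('f,'v) query" where
  "qsubst \<sigma> QEmpty = QEmpty"
| "qsubst \<sigma> (QFact f) = QFact (subst \<sigma> f)"
| "qsubst \<sigma> (QPlus R1 R2) = QPlus (qsubst \<sigma> R1) (qsubst \<sigma> R2)"
| "qsubst \<sigma> (QImp \<phi> R) = QImp (csubst \<sigma> \<phi>) (qsubst \<sigma> R)"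
| "qsubst \<sigma> (QFrom P R) = QFrom (psubst \<sigma> P) (qsubst \<sigma> R)"

fun cclosed :: "'v set \<Rightarrow> ('f,'v) cond \<Rightarrow> bool" where
  "cclosed V CFalse = True"
| "cclosed V (CAtom B) = (vars B \<subseteq> V)"
| "cclosed V (CNot \<psi>) = cclosed V \<psi>"
| "cclosed V (COr \<psi>1 \<psi>2) = (cclosed V \<psi>1 \<and> cclosed V \<psi>2)"
| "cclosed V (CEx P \<psi>) = cclosed (V \<union> pvars P) \<psi>"

fun qclosed :: "'v set \<Rightarrow> ('f,'v) query \<Rightarrow> bool" where
  "qclosed V QEmpty = True"
| "qclosed V (QFact f) = (vars f \<subseteq> V)"
| "qclosed V (QPlus R1 R2) = (qclosed V R1 \<and> qclosed V R2)"
| "qclosed V (QImp \<phi> R) = (cclosed V \<phi> \<and> qclosed V R)"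
| "qclosed V (QFrom P R) = qclosed (V \<union> pvars P) R"

fun wf_cond :: "('s,'f,'v) setting \<Rightarrow> ('f,'v) cond \<Rightarrow> bool" where
  "wf_cond \<Sigma> CFalse = True"
| "wf_cond \<Sigma> (CAtom B) = has_sort \<Sigma> B (sBool \<Sigma>)"
| "wf_cond \<Sigma> (CNot \<psi>) = wf_cond \<Sigma> \<psi>"
| "wf_cond \<Sigma> (COr \<psi>1 \<psi>2) = (wf_cond \<Sigma> \<psi>1 \<and> wf_cond \<Sigma> \<psi>2)"
| "wf_cond \<Sigma> (CEx P \<psi>) = (wf_pat \<Sigma> P \<and> wf_cond \<Sigma> \<psi>)"

fun wf_query :: "('s,'f,'v) setting \<Rightarrow> ('f,'v) query \<Rightarrow> bool" where
  "wf_query \<Sigma> QEmpty = True"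
| "wf_query \<Sigma> (QFact f) = has_sort \<Sigma> f (sFact \<Sigma>)"
| "wf_query \<Sigma> (QPlus R1 R2) = (wf_query \<Sigma> R1 \<and> wf_query \<Sigma> R2)"
| "wf_query \<Sigma> (QImp \<phi> R) = (wf_cond \<Sigma> \<phi> \<and> wf_query \<Sigma> R)"
| "wf_query \<Sigma> (QFrom P R) = (wf_pat \<Sigma> P \<and> wf_query \<Sigma> R)"

definition unique_matching :: "('s,'f,'v) setting \<Rightarrow> ('f,'v) trm \<Rightarrow> bool" where
  "unique_matching \<Sigma> t \<longleftrightarrow> canon \<Sigma> t = t \<and>
     (\<forall>t' \<sigma>1 \<sigma>2. ground t' \<and> canon \<Sigma> t' = t' \<and> has_sort \<Sigma> t' (sFact \<Sigma>) \<and>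
        gsub \<Sigma> \<sigma>1 (vars t) \<and> gsub \<Sigma> \<sigma>2 (vars t) \<and>
        canon \<Sigma> (subst \<sigma>1 t) = t' \<and> canon \<Sigma> (subst \<sigma>2 t) = t' \<longrightarrow>
        (\<forall>v\<in>vars t. canon \<Sigma> (the (\<sigma>1 v)) = canon \<Sigma> (the (\<sigma>2 v))))"

definition det_pat :: "('s,'f,'v) setting \<Rightarrow> ('f,'v) pat \<Rightarrow> bool" where
  "det_pat \<Sigma> P \<longleftrightarrow> pbang P = {#} \<and> (\<exists>t. pquery P = {#t#} \<and> unique_matching \<Sigma> t)"

fun cdet :: "('s,'f,'v) setting \<Rightarrow> ('f,'v) cond \<Rightarrow> bool" where
  "cdet \<Sigma> CFalse = True"
| "cdet \<Sigma> (CAtom B) = True"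
| "cdet \<Sigma> (CNot \<psi>) = cdet \<Sigma> \<psi>"
| "cdet \<Sigma> (COr \<psi>1 \<psi>2) = (cdet \<Sigma> \<psi>1 \<and> cdet \<Sigma> \<psi>2)"
| "cdet \<Sigma> (CEx P \<psi>) = (det_pat \<Sigma> P \<and> cdet \<Sigma> \<psi>)"

fun qdet :: "('s,'f,'v) setting \<Rightarrow> ('f,'v) query \<Rightarrow> bool" where
  "qdet \<Sigma> QEmpty = True"
| "qdet \<Sigma> (QFact f) = True"
| "qdet \<Sigma> (QPlus R1 R2) = (qdet \<Sigma> R1 \<and> qdet \<Sigma> R2)"
| "qdet \<Sigma> (QImp \<phi> R) = (cdet \<Sigma> \<phi> \<and> qdet \<Sigma> R)"
| "qdet \<Sigma> (QFrom P R) = (det_pat \<Sigma> P \<and> qdet \<Sigma> R)"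

definition match_ext :: "('s,'f,'v) setting \<Rightarrow> ('f,'v) sbst \<Rightarrow> ('f,'v) pat \<Rightarrow> ('f,'v) sbst \<Rightarrow> bool" where
  "match_ext \<Sigma> \<sigma> P \<beta> \<longleftrightarrow> gsub \<Sigma> \<beta> (pvars P - dom \<sigma>)"

definition inst :: "('s,'f,'v) setting \<Rightarrow> ('f,'v) sbst \<Rightarrow> ('f,'v) trm multiset \<Rightarrow> ('f,'v) trm multiset" where
  "inst \<Sigma> \<sigma> M = image_mset (\<lambda>t. canon \<Sigma> (subst \<sigma> t)) M"

definition has_match :: "('s,'f,'v) setting \<Rightarrow> ('f,'v) trm multiset \<Rightarrow> ('f,'v) sbst \<Rightarrow> ('f,'v) pat \<Rightarrow> bool" where
  "has_match \<Sigma> F' \<sigma> P \<longleftrightarrow> (\<exists>\<beta> F''. match_ext \<Sigma> \<sigma> P \<beta> \<and>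
      F' = F'' + inst \<Sigma> (\<sigma> ++ \<beta>) (pbang P + pquery P))"

text \<open>Stacks are lists whose head is the top of the stack (the rightmost frame in the paper).
  Frames: Res(B), Not, [a]_psi, [a]^down_psi, [F'|a]_{Ex P.psi}; substitutions are maps.\<close>
datatype ('f,'v) cframe = Res "('f,'v) trm" | NotF | Ev "('f,'v) sbst" "('f,'v) cond"
  | EvD "('f,'v) sbst" "('f,'v) cond"
  | ExF "('f,'v) trm multiset" "('f,'v) sbst" "('f,'v) pat" "('f,'v) cond"

datatype ('f,'v) cstate = CSt "('f,'v) trm multiset" "('f,'v) cframe list" | Sat "('f,'v) trm"

inductive cstep :: "('s,'f,'v) setting \<Rightarrow> ('f,'v) trm multiset \<Rightarrow> ('f,'v) cframe list \<Rightarrow> ('f,'v) cframe list \<Rightarrow> bool"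
  for \<Sigma> F where
  c_false: "cstep \<Sigma> F (Ev \<sigma> CFalse # S) (Res (FF \<Sigma>) # S)"
| c_atom: "cstep \<Sigma> F (Ev \<sigma> (CAtom B) # S) (Res (canon \<Sigma> (subst \<sigma> B)) # S)"
| c_not: "cstep \<Sigma> F (Ev \<sigma> (CNot \<psi>) # S) (Ev \<sigma> \<psi> # NotF # S)"
| c_notres: "cstep \<Sigma> F (Res B # NotF # S) (Res (canon \<Sigma> (Fn (neg \<Sigma>) [B])) # S)"
| c_or: "cstep \<Sigma> F (Ev \<sigma> (COr \<psi>1 \<psi>2) # S) (Ev \<sigma> \<psi>2 # EvD \<sigma> \<psi>1 # S)"
| c_dtrue: "cstep \<Sigma> F (Res (TT \<Sigma>) # EvD \<sigma> \<psi> # S) (Res (TT \<Sigma>) # S)"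
| c_dfalse: "cstep \<Sigma> F (Res (FF \<Sigma>) # EvD \<sigma> \<psi> # S) (Ev \<sigma> \<psi> # S)"
| c_ex: "cstep \<Sigma> F (Ev \<sigma> (CEx P \<psi>) # S) (ExF F \<sigma> P \<psi> # S)"
| c_match: "match_ext \<Sigma> \<sigma> P \<beta> \<Longrightarrow> F' = F'' + inst \<Sigma> (\<sigma> ++ \<beta>) (pbang P + pquery P) \<Longrightarrow>
    cstep \<Sigma> F (ExF F' \<sigma> P \<psi> # S)
      (Ev (\<sigma> ++ \<beta>) \<psi> # ExF (F'' + inst \<Sigma> (\<sigma> ++ \<beta>) (pbang P)) \<sigma> P \<psi> # S)"
| c_exfalse: "cstep \<Sigma> F (Res (FF \<Sigma>) # ExF F' \<sigma> P \<psi> # S) (ExF F' \<sigma> P \<psi> # S)"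
| c_extrue: "cstep \<Sigma> F (Res (TT \<Sigma>) # ExF F' \<sigma> P \<psi> # S) (Res (TT \<Sigma>) # S)"
| c_nomatch: "\<not> has_match \<Sigma> F' \<sigma> P \<Longrightarrow> cstep \<Sigma> F (ExF F' \<sigma> P \<psi> # S) (Res (FF \<Sigma>) # S)"

inductive cst_step :: "('s,'f,'v) setting \<Rightarrow> ('f,'v) cstate \<Rightarrow> ('f,'v) cstate \<Rightarrow> bool" for \<Sigma> where
  "cstep \<Sigma> F S S' \<Longrightarrow> cst_step \<Sigma> (CSt F S) (CSt F S')"
| "cst_step \<Sigma> (CSt F [Res B]) (Sat B)"

definition init_c :: "('f,'v) cond \<Rightarrow> ('f,'v) trm multiset \<Rightarrow> ('f,'v) cstate" where
  "init_c \<phi> F = CSt F [Ev Map.empty \<phi>]"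

datatype ('f,'v) qframe = QEv "('f,'v) sbst" "('f,'v) query"
  | QCnd "('f,'v) sbst" "('f,'v) cframe list" "('f,'v) query"
  | QFr "('f,'v) trm multiset" "('f,'v) sbst" "('f,'v) pat" "('f,'v) query"

datatype ('f,'v) qstate = QSt "('f,'v) trm multiset" "('f,'v) trm multiset" "('f,'v) qframe list"
  | Ans "('f,'v) trm multiset"

inductive qst_step :: "('s,'f,'v) setting \<Rightarrow> ('f,'v) qstate \<Rightarrow> ('f,'v) qstate \<Rightarrow> bool" for \<Sigma> where
  q_fact: "qst_step \<Sigma> (QSt F A (QEv \<sigma> (QFact f) # S)) (QSt F (A + {# canon \<Sigma> (subst \<sigma> f) #}) S)"
| q_empty: "qst_step \<Sigma> (QSt F A (QEv \<sigma> QEmpty # S)) (QSt F A S)"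
| q_plus: "qst_step \<Sigma> (QSt F A (QEv \<sigma> (QPlus R1 R2) # S)) (QSt F A (QEv \<sigma> R1 # QEv \<sigma> R2 # S))"
| q_imp: "qst_step \<Sigma> (QSt F A (QEv \<sigma> (QImp \<phi> R) # S)) (QSt F A (QCnd \<sigma> [Ev \<sigma> \<phi>] R # S))"
| q_cfalse: "qst_step \<Sigma> (QSt F A (QCnd \<sigma> [Res (FF \<Sigma>)] R # S)) (QSt F A S)"
| q_ctrue: "qst_step \<Sigma> (QSt F A (QCnd \<sigma> [Res (TT \<Sigma>)] R # S)) (QSt F A (QEv \<sigma> R # S))"
| q_cstep: "cstep \<Sigma> F S1 S2 \<Longrightarrow>
    qst_step \<Sigma> (QSt F A (QCnd \<sigma> S1 R # S)) (QSt F A (QCnd \<sigma> S2 R # S))"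
| q_from: "qst_step \<Sigma> (QSt F A (QEv \<sigma> (QFrom P R) # S)) (QSt F A (QFr F \<sigma> P R # S))"
| q_match: "match_ext \<Sigma> \<sigma> P \<beta> \<Longrightarrow> F' = F'' + inst \<Sigma> (\<sigma> ++ \<beta>) (pbang P + pquery P) \<Longrightarrow>
    qst_step \<Sigma> (QSt F A (QFr F' \<sigma> P R # S))
      (QSt F A (QEv (\<sigma> ++ \<beta>) R # QFr (F'' + inst \<Sigma> (\<sigma> ++ \<beta>) (pbang P)) \<sigma> P R # S))"
| q_nomatch: "\<not> has_match \<Sigma> F' \<sigma> P \<Longrightarrow> qst_step \<Sigma> (QSt F A (QFr F' \<sigma> P R # S)) (QSt F A S)"
| q_ans: "qst_step \<Sigma> (QSt F A []) (Ans A)"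

definition init_q :: "('f,'v) query \<Rightarrow> ('f,'v) trm multiset \<Rightarrow> ('f,'v) qstate" where
  "init_q Q F = QSt F {#} [QEv Map.empty Q]"

text \<open>t \<rightarrow>! t': reachable and irreducible.\<close>
definition nf_reach :: "('a \<Rightarrow> 'a \<Rightarrow> bool) \<Rightarrow> 'a \<Rightarrow> 'a \<Rightarrow> bool" where
  "nf_reach R a b \<longleftrightarrow> R\<^sup>*\<^sup>* a b \<and> (\<nexists>c. R b c)"

end

theory Submission
  imports Defs
begin

lemma cstep_append: "cstep \<Sigma> F S S' \<Longrightarrow> cstep \<Sigma> F (S @ K) (S' @ K)"
  by (induction rule: cstep.induct) (auto intro: cstep.intros)

lemma cstep_nonempty: "cstep \<Sigma> F S S' \<Longrightarrow> S' \<noteq> []"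
  by (induction rule: cstep.induct) auto

lemma cstep_append_inv:
  assumes "cstep \<Sigma> F (S @ K) T" "S \<noteq> []" "\<forall>B. S \<noteq> [Res B]"
  shows "\<exists>S'. T = S' @ K \<and> cstep \<Sigma> F S S'"
proof -
  obtain x S1 where S: "S = x # S1" using assms(2) by (cases S) auto
  have n: "\<forall>B. S1 = [] \<longrightarrow> x \<noteq> Res B" using assms(3) S by auto
  show ?thesis using assms(1) unfolding S
    by (cases rule: cstep.cases; cases S1) (use n in \<open>force intro: cstep.intros\<close>)+
qed

lemma star_first:
  assumes "r\<^sup>*\<^sup>* a b" "a \<noteq> b" "\<And>c. r a c \<Longrightarrow> c = a'"
  shows "r\<^sup>*\<^sup>* a' b"
  using assms by (metis converse_rtranclpE)

lemma cstar_lift: "(cstep \<Sigma> F)\<^sup>*\<^sup>* S S' \<Longrightarrow> (cstep \<Sigma> F)\<^sup>*\<^sup>* (S @ K) (S' @ K)"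
  by (induction rule: rtranclp_induct) (auto intro: rtranclp.rtrancl_into_rtrancl cstep_append)

lemma cstar_decomp_gen:
  assumes "(cstep \<Sigma> F)\<^sup>*\<^sup>* X T"
  shows "\<forall>S. X = S @ K \<longrightarrow> S \<noteq> [] \<longrightarrow>
    (\<exists>S'. T = S' @ K \<and> S' \<noteq> [] \<and> (cstep \<Sigma> F)\<^sup>*\<^sup>* S S') \<or>
    (\<exists>B. (cstep \<Sigma> F)\<^sup>*\<^sup>* S [Res B] \<and> (cstep \<Sigma> F)\<^sup>*\<^sup>* (Res B # K) T)"
  using assms
proof (induction rule: converse_rtranclp_induct)
  case base
  then show ?case by auto
next
  case (step X U)
  show ?case
  proof (intro allI impI)
    fix S assume X: "X = S @ K" and ne: "S \<noteq> []"
    show "(\<exists>S'. T = S' @ K \<and> S' \<noteq> [] \<and> (cstep \<Sigma> F)\<^sup>*\<^sup>* S S') \<or>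
      (\<exists>B. (cstep \<Sigma> F)\<^sup>*\<^sup>* S [Res B] \<and> (cstep \<Sigma> F)\<^sup>*\<^sup>* (Res B # K) T)"
    proof (cases "\<exists>B. S = [Res B]")
      case True
      then obtain B where SB: "S = [Res B]" by auto
      have "(cstep \<Sigma> F)\<^sup>*\<^sup>* (Res B # K) T" using step(1,2) X SB
        by (simp add: converse_rtranclp_into_rtranclp)
      then show ?thesis using SB by auto
    next
      case False
      then obtain S2 where U: "U = S2 @ K" and st: "cstep \<Sigma> F S S2"
        using cstep_append_inv step(1) X ne by blast
      have "S2 \<noteq> []" using cstep_nonempty st by blast
      from step(3)[rule_format, OF U this] show ?thesis
      proof
        assume "\<exists>S'. T = S' @ K \<and> S' \<noteq> [] \<and> (cstep \<Sigma> F)\<^sup>*\<^sup>* S2 S'"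
        then obtain S' where "T = S' @ K" "S' \<noteq> []" "(cstep \<Sigma> F)\<^sup>*\<^sup>* S2 S'" by blast
        moreover have "(cstep \<Sigma> F)\<^sup>*\<^sup>* S S'" using st \<open>(cstep \<Sigma> F)\<^sup>*\<^sup>* S2 S'\<close>
          by (rule converse_rtranclp_into_rtranclp)
        ultimately show ?thesis by blast
      next
        assume "\<exists>B. (cstep \<Sigma> F)\<^sup>*\<^sup>* S2 [Res B] \<and> (cstep \<Sigma> F)\<^sup>*\<^sup>* (Res B # K) T"
        then obtain B where "(cstep \<Sigma> F)\<^sup>*\<^sup>* S2 [Res B]" "(cstep \<Sigma> F)\<^sup>*\<^sup>* (Res B # K) T" by blast
        then show ?thesis using st by (meson converse_rtranclp_into_rtranclp)
      qed
    qed
  qed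
qed

lemma decomp_single:
  assumes "(cstep \<Sigma> F)\<^sup>*\<^sup>* (X # K) [Res B]" "K \<noteq> []"
  shows "\<exists>B1. (cstep \<Sigma> F)\<^sup>*\<^sup>* [X] [Res B1] \<and> (cstep \<Sigma> F)\<^sup>*\<^sup>* (Res B1 # K) [Res B]"
proof -
  have "(\<exists>S'. [Res B] = S' @ K \<and> S' \<noteq> [] \<and> (cstep \<Sigma> F)\<^sup>*\<^sup>* [X] S') \<or>
    (\<exists>B'. (cstep \<Sigma> F)\<^sup>*\<^sup>* [X] [Res B'] \<and> (cstep \<Sigma> F)\<^sup>*\<^sup>* (Res B' # K) [Res B])"
    using cstar_decomp_gen[OF assms(1), rule_format, of "[X]"] by simp
  moreover have "\<not> (\<exists>S'. [Res B] = S' @ K \<and> S' \<noteq> [])"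
  proof
    assume "\<exists>S'. [Res B] = S' @ K \<and> S' \<noteq> []"
    then obtain S' where "[Res B] = S' @ K" "S' \<noteq> []" by blast
    then show False using assms(2) by (cases S'; cases K) auto
  qed
  ultimately show ?thesis by blast
qed

lemma compose_single:
  "(cstep \<Sigma> F)\<^sup>*\<^sup>* [X] [Res B1] \<Longrightarrow> (cstep \<Sigma> F)\<^sup>*\<^sup>* (Res B1 # K) T \<Longrightarrow> (cstep \<Sigma> F)\<^sup>*\<^sup>* (X # K) T"
  using cstar_lift[of \<Sigma> F "[X]" "[Res B1]" K] by simp

lemma res_nostep: "\<not> cstep \<Sigma> F [Res B] Y"
  by (auto elim: cstep.cases)

lemma res_star: "(cstep \<Sigma> F)\<^sup>*\<^sup>* [Res B] Y \<Longrightarrow> Y = [Res B]"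
  by (metis converse_rtranclpE res_nostep)

definition ceval where "ceval \<Sigma> F \<sigma> \<psi> B \<longleftrightarrow> (cstep \<Sigma> F)\<^sup>*\<^sup>* [Ev \<sigma> \<psi>] [Res B]"
definition exeval where "exeval \<Sigma> F F' \<sigma> P \<psi> B \<longleftrightarrow> (cstep \<Sigma> F)\<^sup>*\<^sup>* [ExF F' \<sigma> P \<psi>] [Res B]"

lemma ceval_CFalse: "ceval \<Sigma> F \<sigma> CFalse B \<longleftrightarrow> B = FF \<Sigma>"
proof
  assume "ceval \<Sigma> F \<sigma> CFalse B"
  then have "(cstep \<Sigma> F)\<^sup>*\<^sup>* [Res (FF \<Sigma>)] [Res B]" unfolding ceval_def
    by (rule star_first) (auto elim: cstep.cases)
  then show "B = FF \<Sigma>" using res_star by fastforce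
next
  assume "B = FF \<Sigma>"
  then show "ceval \<Sigma> F \<sigma> CFalse B" unfolding ceval_def
    using cstep.c_false[of \<Sigma> F \<sigma> "[]"] by auto
qed

lemma ceval_CAtom: "ceval \<Sigma> F \<sigma> (CAtom B0) B \<longleftrightarrow> B = canon \<Sigma> (subst \<sigma> B0)"
proof
  assume "ceval \<Sigma> F \<sigma> (CAtom B0) B"
  then have "(cstep \<Sigma> F)\<^sup>*\<^sup>* [Res (canon \<Sigma> (subst \<sigma> B0))] [Res B]" unfolding ceval_def
    by (rule star_first) (auto elim: cstep.cases)
  then show "B = canon \<Sigma> (subst \<sigma> B0)" using res_star by fastforce
next
  assume "B = canon \<Sigma> (subst \<sigma> B0)"
  then show "ceval \<Sigma> F \<sigma> (CAtom B0) B" unfolding ceval_def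
    using cstep.c_atom[of \<Sigma> F \<sigma> B0 "[]"] by auto
qed

lemma ceval_CNot: "ceval \<Sigma> F \<sigma> (CNot \<psi>) B \<longleftrightarrow> (\<exists>B1. ceval \<Sigma> F \<sigma> \<psi> B1 \<and> B = canon \<Sigma> (Fn (neg \<Sigma>) [B1]))"
proof
  assume "ceval \<Sigma> F \<sigma> (CNot \<psi>) B"
  then have "(cstep \<Sigma> F)\<^sup>*\<^sup>* [Ev \<sigma> \<psi>, NotF] [Res B]" unfolding ceval_def
    by (rule star_first) (auto elim: cstep.cases)
  then obtain B1 where 1: "ceval \<Sigma> F \<sigma> \<psi> B1" and 2: "(cstep \<Sigma> F)\<^sup>*\<^sup>* [Res B1, NotF] [Res B]"
    using decomp_single[of \<Sigma> F _ "[NotF]"] unfolding ceval_def by blast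
  from 2 have "(cstep \<Sigma> F)\<^sup>*\<^sup>* [Res (canon \<Sigma> (Fn (neg \<Sigma>) [B1]))] [Res B]"
    by (rule star_first) (auto elim: cstep.cases)
  then show "\<exists>B1. ceval \<Sigma> F \<sigma> \<psi> B1 \<and> B = canon \<Sigma> (Fn (neg \<Sigma>) [B1])" using 1 res_star by fastforce
next
  assume "\<exists>B1. ceval \<Sigma> F \<sigma> \<psi> B1 \<and> B = canon \<Sigma> (Fn (neg \<Sigma>) [B1])"
  then obtain B1 where 1: "ceval \<Sigma> F \<sigma> \<psi> B1" and B: "B = canon \<Sigma> (Fn (neg \<Sigma>) [B1])" by blast
  have "(cstep \<Sigma> F)\<^sup>*\<^sup>* [Ev \<sigma> \<psi>, NotF] [Res B]"
    by (rule compose_single[OF 1[unfolded ceval_def]]) (use B cstep.c_notres[of \<Sigma> F B1 "[]"] in auto)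
  then show "ceval \<Sigma> F \<sigma> (CNot \<psi>) B" unfolding ceval_def
    using cstep.c_not[of \<Sigma> F \<sigma> \<psi> "[]"] by (meson converse_rtranclp_into_rtranclp)
qed

lemma ceval_COr: "ceval \<Sigma> F \<sigma> (COr \<psi>1 \<psi>2) B \<longleftrightarrow>
  (\<exists>B2. ceval \<Sigma> F \<sigma> \<psi>2 B2 \<and> (B2 = TT \<Sigma> \<and> B = TT \<Sigma> \<or> B2 = FF \<Sigma> \<and> ceval \<Sigma> F \<sigma> \<psi>1 B))"
proof
  assume "ceval \<Sigma> F \<sigma> (COr \<psi>1 \<psi>2) B"
  then have "(cstep \<Sigma> F)\<^sup>*\<^sup>* [Ev \<sigma> \<psi>2, EvD \<sigma> \<psi>1] [Res B]" unfolding ceval_def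
    by (rule star_first) (auto elim: cstep.cases)
  then obtain B2 where 1: "ceval \<Sigma> F \<sigma> \<psi>2 B2" and 2: "(cstep \<Sigma> F)\<^sup>*\<^sup>* [Res B2, EvD \<sigma> \<psi>1] [Res B]"
    using decomp_single[of \<Sigma> F _ "[EvD \<sigma> \<psi>1]"] unfolding ceval_def by blast
  from 2 obtain Y where st: "cstep \<Sigma> F [Res B2, EvD \<sigma> \<psi>1] Y" and Y: "(cstep \<Sigma> F)\<^sup>*\<^sup>* Y [Res B]"
    by (metis converse_rtranclpE list.inject list.simps(3))
  from st have "(B2 = TT \<Sigma> \<and> Y = [Res (TT \<Sigma>)]) \<or> (B2 = FF \<Sigma> \<and> Y = [Ev \<sigma> \<psi>1])"
    by (auto elim: cstep.cases)
  then show "\<exists>B2. ceval \<Sigma> F \<sigma> \<psi>2 B2 \<and> (B2 = TT \<Sigma> \<and> B = TT \<Sigma> \<or> B2 = FF \<Sigma> \<and> ceval \<Sigma> F \<sigma> \<psi>1 B)"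
    using 1 Y res_star unfolding ceval_def by fastforce
next
  assume "\<exists>B2. ceval \<Sigma> F \<sigma> \<psi>2 B2 \<and> (B2 = TT \<Sigma> \<and> B = TT \<Sigma> \<or> B2 = FF \<Sigma> \<and> ceval \<Sigma> F \<sigma> \<psi>1 B)"
  then obtain B2 where 1: "ceval \<Sigma> F \<sigma> \<psi>2 B2" and 2: "B2 = TT \<Sigma> \<and> B = TT \<Sigma> \<or> B2 = FF \<Sigma> \<and> ceval \<Sigma> F \<sigma> \<psi>1 B"
    by blast
  have "(cstep \<Sigma> F)\<^sup>*\<^sup>* [Res B2, EvD \<sigma> \<psi>1] [Res B]"
    using 2
  proof
    assume "B2 = TT \<Sigma> \<and> B = TT \<Sigma>"
    then show ?thesis using cstep.c_dtrue[of \<Sigma> F \<sigma> \<psi>1 "[]"] by auto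
  next
    assume "B2 = FF \<Sigma> \<and> ceval \<Sigma> F \<sigma> \<psi>1 B"
    then show ?thesis using cstep.c_dfalse[of \<Sigma> F \<sigma> \<psi>1 "[]"] unfolding ceval_def
      by (meson converse_rtranclp_into_rtranclp)
  qed
  then have "(cstep \<Sigma> F)\<^sup>*\<^sup>* [Ev \<sigma> \<psi>2, EvD \<sigma> \<psi>1] [Res B]"
    by (rule compose_single[OF 1[unfolded ceval_def]])
  then show "ceval \<Sigma> F \<sigma> (COr \<psi>1 \<psi>2) B" unfolding ceval_def
    using cstep.c_or[of \<Sigma> F \<sigma> \<psi>1 \<psi>2 "[]"] by (meson converse_rtranclp_into_rtranclp)
qed

lemma ceval_CEx: "ceval \<Sigma> F \<sigma> (CEx P \<psi>) B \<longleftrightarrow> exeval \<Sigma> F F \<sigma> P \<psi> B"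
proof
  assume "ceval \<Sigma> F \<sigma> (CEx P \<psi>) B"
  then show "exeval \<Sigma> F F \<sigma> P \<psi> B" unfolding ceval_def exeval_def
    by (rule star_first) (auto elim: cstep.cases)
next
  assume "exeval \<Sigma> F F \<sigma> P \<psi> B"
  then show "ceval \<Sigma> F \<sigma> (CEx P \<psi>) B" unfolding ceval_def exeval_def
    using cstep.c_ex[of \<Sigma> F \<sigma> P \<psi> "[]"] by (meson converse_rtranclp_into_rtranclp)
qed

lemma exeval_unfold: "exeval \<Sigma> F F' \<sigma> P \<psi> B \<longleftrightarrow>
  (\<not> has_match \<Sigma> F' \<sigma> P \<and> B = FF \<Sigma>) \<or>
  (\<exists>\<beta> F''. match_ext \<Sigma> \<sigma> P \<beta> \<and> F' = F'' + inst \<Sigma> (\<sigma> ++ \<beta>) (pbang P + pquery P) \<and>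
     (\<exists>B1. ceval \<Sigma> F (\<sigma> ++ \<beta>) \<psi> B1 \<and>
        (B1 = TT \<Sigma> \<and> B = TT \<Sigma> \<or> B1 = FF \<Sigma> \<and> exeval \<Sigma> F (F'' + inst \<Sigma> (\<sigma> ++ \<beta>) (pbang P)) \<sigma> P \<psi> B)))"
  (is "?L \<longleftrightarrow> ?R")
proof
  assume ?L
  then obtain Y where st: "cstep \<Sigma> F [ExF F' \<sigma> P \<psi>] Y" and Y: "(cstep \<Sigma> F)\<^sup>*\<^sup>* Y [Res B]"
    unfolding exeval_def by (metis converse_rtranclpE list.inject cframe.distinct)
  from st have "(\<exists>\<beta> F''. match_ext \<Sigma> \<sigma> P \<beta> \<and> F' = F'' + inst \<Sigma> (\<sigma> ++ \<beta>) (pbang P + pquery P) \<and>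
        Y = [Ev (\<sigma> ++ \<beta>) \<psi>, ExF (F'' + inst \<Sigma> (\<sigma> ++ \<beta>) (pbang P)) \<sigma> P \<psi>]) \<or>
      (\<not> has_match \<Sigma> F' \<sigma> P \<and> Y = [Res (FF \<Sigma>)])"
    by (auto elim: cstep.cases)
  then show ?R
  proof
    assume "\<not> has_match \<Sigma> F' \<sigma> P \<and> Y = [Res (FF \<Sigma>)]"
    then show ?R using Y res_star by fastforce
  next
    assume "\<exists>\<beta> F''. match_ext \<Sigma> \<sigma> P \<beta> \<and> F' = F'' + inst \<Sigma> (\<sigma> ++ \<beta>) (pbang P + pquery P) \<and>
        Y = [Ev (\<sigma> ++ \<beta>) \<psi>, ExF (F'' + inst \<Sigma> (\<sigma> ++ \<beta>) (pbang P)) \<sigma> P \<psi>]"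
    then obtain \<beta> F'' where m: "match_ext \<Sigma> \<sigma> P \<beta>" "F' = F'' + inst \<Sigma> (\<sigma> ++ \<beta>) (pbang P + pquery P)"
      and Yd: "Y = [Ev (\<sigma> ++ \<beta>) \<psi>, ExF (F'' + inst \<Sigma> (\<sigma> ++ \<beta>) (pbang P)) \<sigma> P \<psi>]" by blast
    define F2 where "F2 = F'' + inst \<Sigma> (\<sigma> ++ \<beta>) (pbang P)"
    obtain B1 where 1: "ceval \<Sigma> F (\<sigma> ++ \<beta>) \<psi> B1" and 2: "(cstep \<Sigma> F)\<^sup>*\<^sup>* [Res B1, ExF F2 \<sigma> P \<psi>] [Res B]"
      using decomp_single[of \<Sigma> F _ "[ExF F2 \<sigma> P \<psi>]"] Y Yd unfolding ceval_def F2_def by blast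
    from 2 obtain Z where st2: "cstep \<Sigma> F [Res B1, ExF F2 \<sigma> P \<psi>] Z" and Z: "(cstep \<Sigma> F)\<^sup>*\<^sup>* Z [Res B]"
      by (metis converse_rtranclpE list.inject list.simps(3))
    from st2 have "(B1 = TT \<Sigma> \<and> Z = [Res (TT \<Sigma>)]) \<or> (B1 = FF \<Sigma> \<and> Z = [ExF F2 \<sigma> P \<psi>])"
      by (auto elim: cstep.cases)
    then have "B1 = TT \<Sigma> \<and> B = TT \<Sigma> \<or> B1 = FF \<Sigma> \<and> exeval \<Sigma> F F2 \<sigma> P \<psi> B"
      using Z res_star unfolding exeval_def by fastforce
    then show ?R using m 1 unfolding F2_def by blast
  qed
next
  assume ?R
  then show ?L
  proof
    assume a: "\<not> has_match \<Sigma> F' \<sigma> P \<and> B = FF \<Sigma>"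
    then show ?L unfolding exeval_def using cstep.c_nomatch[of \<Sigma> F' \<sigma> P F \<psi> "[]"] by auto
  next
    assume "\<exists>\<beta> F''. match_ext \<Sigma> \<sigma> P \<beta> \<and> F' = F'' + inst \<Sigma> (\<sigma> ++ \<beta>) (pbang P + pquery P) \<and>
     (\<exists>B1. ceval \<Sigma> F (\<sigma> ++ \<beta>) \<psi> B1 \<and>
        (B1 = TT \<Sigma> \<and> B = TT \<Sigma> \<or> B1 = FF \<Sigma> \<and> exeval \<Sigma> F (F'' + inst \<Sigma> (\<sigma> ++ \<beta>) (pbang P)) \<sigma> P \<psi> B))"
    then obtain \<beta> F'' B1 where m: "match_ext \<Sigma> \<sigma> P \<beta>" "F' = F'' + inst \<Sigma> (\<sigma> ++ \<beta>) (pbang P + pquery P)"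
      and 1: "ceval \<Sigma> F (\<sigma> ++ \<beta>) \<psi> B1"
      and 2: "B1 = TT \<Sigma> \<and> B = TT \<Sigma> \<or> B1 = FF \<Sigma> \<and> exeval \<Sigma> F (F'' + inst \<Sigma> (\<sigma> ++ \<beta>) (pbang P)) \<sigma> P \<psi> B"
      by blast
    define F2 where "F2 = F'' + inst \<Sigma> (\<sigma> ++ \<beta>) (pbang P)"
    have "(cstep \<Sigma> F)\<^sup>*\<^sup>* [Res B1, ExF F2 \<sigma> P \<psi>] [Res B]"
      using 2
    proof
      assume "B1 = TT \<Sigma> \<and> B = TT \<Sigma>"
      then show ?thesis using cstep.c_extrue[of \<Sigma> F F2 \<sigma> P \<psi> "[]"] by auto
    next
      assume "B1 = FF \<Sigma> \<and> exeval \<Sigma> F (F'' + inst \<Sigma> (\<sigma> ++ \<beta>) (pbang P)) \<sigma> P \<psi> B"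
      then show ?thesis using cstep.c_exfalse[of \<Sigma> F F2 \<sigma> P \<psi> "[]"] unfolding exeval_def F2_def
        by (meson converse_rtranclp_into_rtranclp)
    qed
    then have "(cstep \<Sigma> F)\<^sup>*\<^sup>* [Ev (\<sigma> ++ \<beta>) \<psi>, ExF F2 \<sigma> P \<psi>] [Res B]"
      by (rule compose_single[OF 1[unfolded ceval_def]])
    then show ?L unfolding exeval_def F2_def
      using cstep.c_match[OF m, of F \<psi> "[]"] by (meson converse_rtranclp_into_rtranclp)
  qed
qed

lemma q_fact': "qst_step \<Sigma> (QSt F A (QEv \<sigma> (QFact f) # S)) (QSt F (add_mset (canon \<Sigma> (subst \<sigma> f)) A) S)"
  using qst_step.q_fact by fastforce

lemma qstep_append:
  "qst_step \<Sigma> (QSt F A S) (QSt F' A' S') \<Longrightarrow> qst_step \<Sigma> (QSt F A (S @ K)) (QSt F' A' (S' @ K))"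
  by (cases rule: qst_step.cases) (auto intro: qst_step.intros q_fact')

lemma qstep_append_inv:
  assumes "qst_step \<Sigma> (QSt F A (S @ K)) T" "S \<noteq> []"
  shows "\<exists>A' S'. T = QSt F A' (S' @ K) \<and> qst_step \<Sigma> (QSt F A S) (QSt F A' S')"
proof -
  obtain x S1 where S: "S = x # S1" using assms(2) by (cases S) auto
  show ?thesis using assms(1) unfolding S
    by (cases rule: qst_step.cases) (force intro: qst_step.intros q_fact')+
qed

lemma qstep_from_QSt:
  "qst_step \<Sigma> (QSt F A S) U \<Longrightarrow> (U = Ans A \<and> S = []) \<or> (\<exists>A2 S2. U = QSt F A2 S2)"
  by (cases rule: qst_step.cases) auto

lemma ans_nostep: "\<not> qst_step \<Sigma> (Ans A) Y"
  by (auto elim: qst_step.cases)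

lemma ans_star: "(qst_step \<Sigma>)\<^sup>*\<^sup>* (Ans A) Y \<Longrightarrow> Y = Ans A"
  by (metis converse_rtranclpE ans_nostep)

lemma empty_star: "(qst_step \<Sigma>)\<^sup>*\<^sup>* (QSt F A []) (QSt F A' []) \<Longrightarrow> A' = A"
proof (erule converse_rtranclpE)
  fix y assume "qst_step \<Sigma> (QSt F A []) y" "(qst_step \<Sigma>)\<^sup>*\<^sup>* y (QSt F A' [])"
  moreover have "y = Ans A" using \<open>qst_step \<Sigma> (QSt F A []) y\<close> by (auto elim: qst_step.cases)
  ultimately show "A' = A" using ans_star by fastforce
qed simp

lemma qstar_lift_gen:
  assumes "(qst_step \<Sigma>)\<^sup>*\<^sup>* X Y"
  shows "\<forall>F A S A' S'. X = QSt F A S \<longrightarrow> Y = QSt F A' S' \<longrightarrow>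
    (qst_step \<Sigma>)\<^sup>*\<^sup>* (QSt F A (S @ K)) (QSt F A' (S' @ K))"
  using assms
proof (induction rule: converse_rtranclp_induct)
  case base
  then show ?case by auto
next
  case (step X U)
  show ?case
  proof (intro allI impI)
    fix F A S A' S' assume X: "X = QSt F A S" and Y: "Y = QSt F A' S'"
    from qstep_from_QSt[OF step(1)[unfolded X]]
    show "(qst_step \<Sigma>)\<^sup>*\<^sup>* (QSt F A (S @ K)) (QSt F A' (S' @ K))"
    proof
      assume "U = Ans A \<and> S = []"
      then show ?thesis using step(2) Y ans_star by fastforce
    next
      assume "\<exists>A2 S2. U = QSt F A2 S2"
      then obtain A2 S2 where U: "U = QSt F A2 S2" by blast
      have "qst_step \<Sigma> (QSt F A (S @ K)) (QSt F A2 (S2 @ K))"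
        using qstep_append step(1) X U by blast
      moreover have "(qst_step \<Sigma>)\<^sup>*\<^sup>* (QSt F A2 (S2 @ K)) (QSt F A' (S' @ K))"
        using step(3) U Y by blast
      ultimately show ?thesis by (rule converse_rtranclp_into_rtranclp)
    qed
  qed
qed

lemma qstar_lift:
  "(qst_step \<Sigma>)\<^sup>*\<^sup>* (QSt F A S) (QSt F A' S') \<Longrightarrow>
    (qst_step \<Sigma>)\<^sup>*\<^sup>* (QSt F A (S @ K)) (QSt F A' (S' @ K))"
  using qstar_lift_gen by blast

lemma qstar_decomp_gen:
  assumes "(qst_step \<Sigma>)\<^sup>*\<^sup>* X T"
  shows "\<forall>A S. X = QSt F A (S @ K) \<longrightarrow> S \<noteq> [] \<longrightarrow>
    (\<exists>A' S'. T = QSt F A' (S' @ K) \<and> S' \<noteq> [] \<and> (qst_step \<Sigma>)\<^sup>*\<^sup>* (QSt F A S) (QSt F A' S')) \<or>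
    (\<exists>A'. (qst_step \<Sigma>)\<^sup>*\<^sup>* (QSt F A S) (QSt F A' []) \<and> (qst_step \<Sigma>)\<^sup>*\<^sup>* (QSt F A' K) T)"
  using assms
proof (induction rule: converse_rtranclp_induct)
  case base
  then show ?case by auto
next
  case (step X U)
  show ?case
  proof (intro allI impI)
    fix A S assume X: "X = QSt F A (S @ K)" and ne: "S \<noteq> []"
    obtain A2 S2 where U: "U = QSt F A2 (S2 @ K)" and st: "qst_step \<Sigma> (QSt F A S) (QSt F A2 S2)"
      using qstep_append_inv step(1) X ne by blast
    show "(\<exists>A' S'. T = QSt F A' (S' @ K) \<and> S' \<noteq> [] \<and> (qst_step \<Sigma>)\<^sup>*\<^sup>* (QSt F A S) (QSt F A' S')) \<or>
    (\<exists>A'. (qst_step \<Sigma>)\<^sup>*\<^sup>* (QSt F A S) (QSt F A' []) \<and> (qst_step \<Sigma>)\<^sup>*\<^sup>* (QSt F A' K) T)"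
    proof (cases "S2 = []")
      case True
      then show ?thesis using st step(2) U by auto
    next
      case False
      from step(3)[rule_format, OF U False] show ?thesis
      proof
        assume "\<exists>A' S'. T = QSt F A' (S' @ K) \<and> S' \<noteq> [] \<and> (qst_step \<Sigma>)\<^sup>*\<^sup>* (QSt F A2 S2) (QSt F A' S')"
        then obtain A' S' where "T = QSt F A' (S' @ K)" "S' \<noteq> []" "(qst_step \<Sigma>)\<^sup>*\<^sup>* (QSt F A2 S2) (QSt F A' S')"
          by blast
        moreover have "(qst_step \<Sigma>)\<^sup>*\<^sup>* (QSt F A S) (QSt F A' S')"
          using st \<open>(qst_step \<Sigma>)\<^sup>*\<^sup>* (QSt F A2 S2) (QSt F A' S')\<close> by (rule converse_rtranclp_into_rtranclp)
        ultimately show ?thesis by blast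
      next
        assume "\<exists>A'. (qst_step \<Sigma>)\<^sup>*\<^sup>* (QSt F A2 S2) (QSt F A' []) \<and> (qst_step \<Sigma>)\<^sup>*\<^sup>* (QSt F A' K) T"
        then obtain A' where "(qst_step \<Sigma>)\<^sup>*\<^sup>* (QSt F A2 S2) (QSt F A' [])" "(qst_step \<Sigma>)\<^sup>*\<^sup>* (QSt F A' K) T"
          by blast
        moreover have "(qst_step \<Sigma>)\<^sup>*\<^sup>* (QSt F A S) (QSt F A' [])"
          using st \<open>(qst_step \<Sigma>)\<^sup>*\<^sup>* (QSt F A2 S2) (QSt F A' [])\<close> by (rule converse_rtranclp_into_rtranclp)
        ultimately show ?thesis by blast
      qed
    qed
  qed
qed

lemma qdecomp_single:
  assumes "(qst_step \<Sigma>)\<^sup>*\<^sup>* (QSt F A (X # K)) (QSt F A' [])" "K \<noteq> []"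
  shows "\<exists>A1. (qst_step \<Sigma>)\<^sup>*\<^sup>* (QSt F A [X]) (QSt F A1 []) \<and> (qst_step \<Sigma>)\<^sup>*\<^sup>* (QSt F A1 K) (QSt F A' [])"
  using qstar_decomp_gen[OF assms(1), rule_format, where A=A and S="[X]"] assms(2) by auto

lemma qcompose_single:
  assumes h1: "(qst_step \<Sigma>)\<^sup>*\<^sup>* (QSt F A [X]) (QSt F A1 [])" and h2: "(qst_step \<Sigma>)\<^sup>*\<^sup>* (QSt F A1 K) T"
  shows "(qst_step \<Sigma>)\<^sup>*\<^sup>* (QSt F A (X # K)) T"
proof -
  have "(qst_step \<Sigma>)\<^sup>*\<^sup>* (QSt F A ([X] @ K)) (QSt F A1 ([] @ K))" by (rule qstar_lift[OF h1])
  then show ?thesis using h2 by simp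
qed

lemma qcnd_lift:
  "(cstep \<Sigma> F)\<^sup>*\<^sup>* C C' \<Longrightarrow>
   (qst_step \<Sigma>)\<^sup>*\<^sup>* (QSt F A (QCnd \<sigma> C R # K)) (QSt F A (QCnd \<sigma> C' R # K))"
  by (induction rule: rtranclp_induct) (auto intro: rtranclp.rtrancl_into_rtrancl qst_step.q_cstep)

lemma qcnd_decomp_gen:
  assumes "(qst_step \<Sigma>)\<^sup>*\<^sup>* X T"
  shows "\<forall>C. X = QSt F A (QCnd \<sigma> C R # K) \<longrightarrow>
    (\<exists>C'. T = QSt F A (QCnd \<sigma> C' R # K) \<and> (cstep \<Sigma> F)\<^sup>*\<^sup>* C C') \<or>
    ((cstep \<Sigma> F)\<^sup>*\<^sup>* C [Res (TT \<Sigma>)] \<and> (qst_step \<Sigma>)\<^sup>*\<^sup>* (QSt F A (QEv \<sigma> R # K)) T) \<or>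
    ((cstep \<Sigma> F)\<^sup>*\<^sup>* C [Res (FF \<Sigma>)] \<and> (qst_step \<Sigma>)\<^sup>*\<^sup>* (QSt F A K) T)"
  using assms
proof (induction rule: converse_rtranclp_induct)
  case base
  then show ?case by auto
next
  case (step X U)
  show ?case
  proof (intro allI impI)
    fix C assume X: "X = QSt F A (QCnd \<sigma> C R # K)"
    have "(U = QSt F A K \<and> C = [Res (FF \<Sigma>)]) \<or> (U = QSt F A (QEv \<sigma> R # K) \<and> C = [Res (TT \<Sigma>)]) \<or>
      (\<exists>C2. U = QSt F A (QCnd \<sigma> C2 R # K) \<and> cstep \<Sigma> F C C2)"
      using step(1) unfolding X by (cases rule: qst_step.cases) auto
    then show "(\<exists>C'. T = QSt F A (QCnd \<sigma> C' R # K) \<and> (cstep \<Sigma> F)\<^sup>*\<^sup>* C C') \<or>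
    ((cstep \<Sigma> F)\<^sup>*\<^sup>* C [Res (TT \<Sigma>)] \<and> (qst_step \<Sigma>)\<^sup>*\<^sup>* (QSt F A (QEv \<sigma> R # K)) T) \<or>
    ((cstep \<Sigma> F)\<^sup>*\<^sup>* C [Res (FF \<Sigma>)] \<and> (qst_step \<Sigma>)\<^sup>*\<^sup>* (QSt F A K) T)"
    proof (elim disjE exE conjE)
      assume "U = QSt F A K" "C = [Res (FF \<Sigma>)]"
      then show ?thesis using step(2) by auto
    next
      assume "U = QSt F A (QEv \<sigma> R # K)" "C = [Res (TT \<Sigma>)]"
      then show ?thesis using step(2) by auto
    next
      fix C2 assume U: "U = QSt F A (QCnd \<sigma> C2 R # K)" and st: "cstep \<Sigma> F C C2"
      from step(3)[rule_format, OF U] show ?thesis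
      proof (elim disjE exE conjE)
        fix C' assume "T = QSt F A (QCnd \<sigma> C' R # K)" "(cstep \<Sigma> F)\<^sup>*\<^sup>* C2 C'"
        moreover have "(cstep \<Sigma> F)\<^sup>*\<^sup>* C C'" using st \<open>(cstep \<Sigma> F)\<^sup>*\<^sup>* C2 C'\<close>
          by (rule converse_rtranclp_into_rtranclp)
        ultimately show ?thesis by blast
      next
        assume "(cstep \<Sigma> F)\<^sup>*\<^sup>* C2 [Res (TT \<Sigma>)]" "(qst_step \<Sigma>)\<^sup>*\<^sup>* (QSt F A (QEv \<sigma> R # K)) T"
        moreover have "(cstep \<Sigma> F)\<^sup>*\<^sup>* C [Res (TT \<Sigma>)]" using st \<open>(cstep \<Sigma> F)\<^sup>*\<^sup>* C2 [Res (TT \<Sigma>)]\<close>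
          by (rule converse_rtranclp_into_rtranclp)
        ultimately show ?thesis by blast
      next
        assume "(cstep \<Sigma> F)\<^sup>*\<^sup>* C2 [Res (FF \<Sigma>)]" "(qst_step \<Sigma>)\<^sup>*\<^sup>* (QSt F A K) T"
        moreover have "(cstep \<Sigma> F)\<^sup>*\<^sup>* C [Res (FF \<Sigma>)]" using st \<open>(cstep \<Sigma> F)\<^sup>*\<^sup>* C2 [Res (FF \<Sigma>)]\<close>
          by (rule converse_rtranclp_into_rtranclp)
        ultimately show ?thesis by blast
      qed
    qed
  qed
qed

definition qev where "qev \<Sigma> F \<sigma> R A A' \<longleftrightarrow> (qst_step \<Sigma>)\<^sup>*\<^sup>* (QSt F A [QEv \<sigma> R]) (QSt F A' [])"
definition qfr where "qfr \<Sigma> F F' \<sigma> P R A A' \<longleftrightarrow> (qst_step \<Sigma>)\<^sup>*\<^sup>* (QSt F A [QFr F' \<sigma> P R]) (QSt F A' [])"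

lemma qev_QEmpty: "qev \<Sigma> F \<sigma> QEmpty A A' \<longleftrightarrow> A' = A"
proof
  assume "qev \<Sigma> F \<sigma> QEmpty A A'"
  then have "(qst_step \<Sigma>)\<^sup>*\<^sup>* (QSt F A []) (QSt F A' [])" unfolding qev_def
    by (rule star_first) (auto elim: qst_step.cases)
  then show "A' = A" by (rule empty_star)
qed (use qst_step.q_empty[of \<Sigma> F A \<sigma> "[]"] in \<open>auto simp: qev_def\<close>)

lemma qev_QFact: "qev \<Sigma> F \<sigma> (QFact f) A A' \<longleftrightarrow> A' = A + {# canon \<Sigma> (subst \<sigma> f) #}"
proof
  assume "qev \<Sigma> F \<sigma> (QFact f) A A'"
  then have "(qst_step \<Sigma>)\<^sup>*\<^sup>* (QSt F (A + {# canon \<Sigma> (subst \<sigma> f) #}) []) (QSt F A' [])" unfolding qev_def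
    by (rule star_first) (auto elim: qst_step.cases)
  then show "A' = A + {# canon \<Sigma> (subst \<sigma> f) #}" by (rule empty_star)
qed (use qst_step.q_fact[of \<Sigma> F A \<sigma> f "[]"] in \<open>auto simp: qev_def\<close>)

lemma qev_QPlus: "qev \<Sigma> F \<sigma> (QPlus R1 R2) A A' \<longleftrightarrow> (\<exists>A1. qev \<Sigma> F \<sigma> R1 A A1 \<and> qev \<Sigma> F \<sigma> R2 A1 A')"
proof
  assume "qev \<Sigma> F \<sigma> (QPlus R1 R2) A A'"
  then have "(qst_step \<Sigma>)\<^sup>*\<^sup>* (QSt F A [QEv \<sigma> R1, QEv \<sigma> R2]) (QSt F A' [])" unfolding qev_def
    by (rule star_first) (auto elim: qst_step.cases)
  then show "\<exists>A1. qev \<Sigma> F \<sigma> R1 A A1 \<and> qev \<Sigma> F \<sigma> R2 A1 A'"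
    using qdecomp_single[of \<Sigma> F A _ "[QEv \<sigma> R2]"] unfolding qev_def by blast
next
  assume "\<exists>A1. qev \<Sigma> F \<sigma> R1 A A1 \<and> qev \<Sigma> F \<sigma> R2 A1 A'"
  then obtain A1 where 1: "qev \<Sigma> F \<sigma> R1 A A1" and 2: "qev \<Sigma> F \<sigma> R2 A1 A'" by blast
  have "(qst_step \<Sigma>)\<^sup>*\<^sup>* (QSt F A [QEv \<sigma> R1, QEv \<sigma> R2]) (QSt F A' [])"
    using qcompose_single 1 2 unfolding qev_def by fastforce
  then show "qev \<Sigma> F \<sigma> (QPlus R1 R2) A A'" unfolding qev_def
    using qst_step.q_plus[of \<Sigma> F A \<sigma> R1 R2 "[]"] by (meson converse_rtranclp_into_rtranclp)
qed

lemma qev_QImp: "qev \<Sigma> F \<sigma> (QImp \<phi> R) A A' \<longleftrightarrow>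
  (ceval \<Sigma> F \<sigma> \<phi> (TT \<Sigma>) \<and> qev \<Sigma> F \<sigma> R A A') \<or> (ceval \<Sigma> F \<sigma> \<phi> (FF \<Sigma>) \<and> A' = A)"
proof
  assume "qev \<Sigma> F \<sigma> (QImp \<phi> R) A A'"
  then have "(qst_step \<Sigma>)\<^sup>*\<^sup>* (QSt F A [QCnd \<sigma> [Ev \<sigma> \<phi>] R]) (QSt F A' [])" unfolding qev_def
    by (rule star_first) (auto elim: qst_step.cases)
  from qcnd_decomp_gen[OF this, rule_format, where C="[Ev \<sigma> \<phi>]" and F=F and A=A and \<sigma>=\<sigma> and R=R and K="[]"]
  show "(ceval \<Sigma> F \<sigma> \<phi> (TT \<Sigma>) \<and> qev \<Sigma> F \<sigma> R A A') \<or> (ceval \<Sigma> F \<sigma> \<phi> (FF \<Sigma>) \<and> A' = A)"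
    unfolding ceval_def qev_def using empty_star by fastforce
next
  assume "(ceval \<Sigma> F \<sigma> \<phi> (TT \<Sigma>) \<and> qev \<Sigma> F \<sigma> R A A') \<or> (ceval \<Sigma> F \<sigma> \<phi> (FF \<Sigma>) \<and> A' = A)"
  then have "(qst_step \<Sigma>)\<^sup>*\<^sup>* (QSt F A [QCnd \<sigma> [Ev \<sigma> \<phi>] R]) (QSt F A' [])"
  proof
    assume a: "ceval \<Sigma> F \<sigma> \<phi> (TT \<Sigma>) \<and> qev \<Sigma> F \<sigma> R A A'"
    have "(qst_step \<Sigma>)\<^sup>*\<^sup>* (QSt F A [QCnd \<sigma> [Ev \<sigma> \<phi>] R]) (QSt F A [QCnd \<sigma> [Res (TT \<Sigma>)] R])"
      using qcnd_lift[where C="[Ev \<sigma> \<phi>]" and C'="[Res (TT \<Sigma>)]" and A=A and \<sigma>=\<sigma> and R=R and K="[]"] a unfolding ceval_def by blast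
    moreover have "qst_step \<Sigma> (QSt F A [QCnd \<sigma> [Res (TT \<Sigma>)] R]) (QSt F A [QEv \<sigma> R])"
      using qst_step.q_ctrue[of \<Sigma> F A \<sigma> R "[]"] by simp
    ultimately show ?thesis using a unfolding qev_def by (meson rtranclp.rtrancl_into_rtrancl rtranclp_trans)
  next
    assume a: "ceval \<Sigma> F \<sigma> \<phi> (FF \<Sigma>) \<and> A' = A"
    have "(qst_step \<Sigma>)\<^sup>*\<^sup>* (QSt F A [QCnd \<sigma> [Ev \<sigma> \<phi>] R]) (QSt F A [QCnd \<sigma> [Res (FF \<Sigma>)] R])"
      using qcnd_lift[where C="[Ev \<sigma> \<phi>]" and C'="[Res (FF \<Sigma>)]" and A=A and \<sigma>=\<sigma> and R=R and K="[]"] a unfolding ceval_def by blast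
    moreover have "qst_step \<Sigma> (QSt F A [QCnd \<sigma> [Res (FF \<Sigma>)] R]) (QSt F A [])"
      using qst_step.q_cfalse[of \<Sigma> F A \<sigma> R "[]"] by simp
    ultimately show ?thesis using a by (meson rtranclp.rtrancl_into_rtrancl)
  qed
  then show "qev \<Sigma> F \<sigma> (QImp \<phi> R) A A'" unfolding qev_def
    using qst_step.q_imp[of \<Sigma> F A \<sigma> \<phi> R "[]"] by (meson converse_rtranclp_into_rtranclp)
qed

lemma qev_QFrom: "qev \<Sigma> F \<sigma> (QFrom P R) A A' \<longleftrightarrow> qfr \<Sigma> F F \<sigma> P R A A'"
proof
  assume "qev \<Sigma> F \<sigma> (QFrom P R) A A'"
  then show "qfr \<Sigma> F F \<sigma> P R A A'" unfolding qev_def qfr_def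
    by (rule star_first) (auto elim: qst_step.cases)
next
  assume "qfr \<Sigma> F F \<sigma> P R A A'"
  then show "qev \<Sigma> F \<sigma> (QFrom P R) A A'" unfolding qev_def qfr_def
    using qst_step.q_from[of \<Sigma> F A \<sigma> P R "[]"] by (meson converse_rtranclp_into_rtranclp)
qed

lemma qfr_unfold: "qfr \<Sigma> F F' \<sigma> P R A A' \<longleftrightarrow>
  (\<not> has_match \<Sigma> F' \<sigma> P \<and> A' = A) \<or>
  (\<exists>\<beta> F''. match_ext \<Sigma> \<sigma> P \<beta> \<and> F' = F'' + inst \<Sigma> (\<sigma> ++ \<beta>) (pbang P + pquery P) \<and>
     (\<exists>A1. qev \<Sigma> F (\<sigma> ++ \<beta>) R A A1 \<and> qfr \<Sigma> F (F'' + inst \<Sigma> (\<sigma> ++ \<beta>) (pbang P)) \<sigma> P R A1 A'))"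
  (is "?L \<longleftrightarrow> ?R")
proof
  assume ?L
  then obtain Y where st: "qst_step \<Sigma> (QSt F A [QFr F' \<sigma> P R]) Y" and Y: "(qst_step \<Sigma>)\<^sup>*\<^sup>* Y (QSt F A' [])"
    unfolding qfr_def by (metis converse_rtranclpE qstate.inject list.distinct(1))
  from st have "(\<exists>\<beta> F''. match_ext \<Sigma> \<sigma> P \<beta> \<and> F' = F'' + inst \<Sigma> (\<sigma> ++ \<beta>) (pbang P + pquery P) \<and>
        Y = QSt F A [QEv (\<sigma> ++ \<beta>) R, QFr (F'' + inst \<Sigma> (\<sigma> ++ \<beta>) (pbang P)) \<sigma> P R]) \<or>
      (\<not> has_match \<Sigma> F' \<sigma> P \<and> Y = QSt F A [])"
    by (auto elim: qst_step.cases)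
  then show ?R
  proof
    assume "\<not> has_match \<Sigma> F' \<sigma> P \<and> Y = QSt F A []"
    then show ?R using Y empty_star by fastforce
  next
    assume "\<exists>\<beta> F''. match_ext \<Sigma> \<sigma> P \<beta> \<and> F' = F'' + inst \<Sigma> (\<sigma> ++ \<beta>) (pbang P + pquery P) \<and>
        Y = QSt F A [QEv (\<sigma> ++ \<beta>) R, QFr (F'' + inst \<Sigma> (\<sigma> ++ \<beta>) (pbang P)) \<sigma> P R]"
    then obtain \<beta> F'' where m: "match_ext \<Sigma> \<sigma> P \<beta>" "F' = F'' + inst \<Sigma> (\<sigma> ++ \<beta>) (pbang P + pquery P)"
      and Yd: "Y = QSt F A [QEv (\<sigma> ++ \<beta>) R, QFr (F'' + inst \<Sigma> (\<sigma> ++ \<beta>) (pbang P)) \<sigma> P R]" by blast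
    show ?R using qdecomp_single[of \<Sigma> F A _ "[QFr (F'' + inst \<Sigma> (\<sigma> ++ \<beta>) (pbang P)) \<sigma> P R]" A'] Y Yd m
      unfolding qev_def qfr_def by blast
  qed
next
  assume ?R
  then show ?L
  proof
    assume a: "\<not> has_match \<Sigma> F' \<sigma> P \<and> A' = A"
    then show ?L unfolding qfr_def using qst_step.q_nomatch[of \<Sigma> F' \<sigma> P F A R "[]"] by auto
  next
    assume "\<exists>\<beta> F''. match_ext \<Sigma> \<sigma> P \<beta> \<and> F' = F'' + inst \<Sigma> (\<sigma> ++ \<beta>) (pbang P + pquery P) \<and>
     (\<exists>A1. qev \<Sigma> F (\<sigma> ++ \<beta>) R A A1 \<and> qfr \<Sigma> F (F'' + inst \<Sigma> (\<sigma> ++ \<beta>) (pbang P)) \<sigma> P R A1 A')"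
    then obtain \<beta> F'' A1 where m: "match_ext \<Sigma> \<sigma> P \<beta>" "F' = F'' + inst \<Sigma> (\<sigma> ++ \<beta>) (pbang P + pquery P)"
      and 1: "qev \<Sigma> F (\<sigma> ++ \<beta>) R A A1"
      and 2: "qfr \<Sigma> F (F'' + inst \<Sigma> (\<sigma> ++ \<beta>) (pbang P)) \<sigma> P R A1 A'"
      by blast
    have "(qst_step \<Sigma>)\<^sup>*\<^sup>* (QSt F A [QEv (\<sigma> ++ \<beta>) R, QFr (F'' + inst \<Sigma> (\<sigma> ++ \<beta>) (pbang P)) \<sigma> P R]) (QSt F A' [])"
      using qcompose_single 1 2 unfolding qev_def qfr_def by fastforce
    then show ?L unfolding qfr_def
      using qst_step.q_match[OF m, of F A R "[]"] by (meson converse_rtranclp_into_rtranclp)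
  qed
qed

lemma vsa1: "valid_setting \<Sigma> \<Longrightarrow> (\<forall>s. leq \<Sigma> s s)"
  by (unfold valid_setting_def, elim conjE, assumption)
lemma vsa2: "valid_setting \<Sigma> \<Longrightarrow> (\<forall>s1 s2 s3. leq \<Sigma> s1 s2 \<longrightarrow> leq \<Sigma> s2 s3 \<longrightarrow> leq \<Sigma> s1 s3)"
  by (unfold valid_setting_def, elim conjE, assumption)
lemma vs_rank_tt: "valid_setting \<Sigma> \<Longrightarrow> ([], sBool \<Sigma>) \<in> ranks \<Sigma> (tt \<Sigma>)"
  by (unfold valid_setting_def, elim conjE, assumption)
lemma vs_rank_ff: "valid_setting \<Sigma> \<Longrightarrow> ([], sBool \<Sigma>) \<in> ranks \<Sigma> (ff \<Sigma>)"
  by (unfold valid_setting_def, elim conjE, assumption)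
lemma vs_rank_neg: "valid_setting \<Sigma> \<Longrightarrow> ([sBool \<Sigma>], sBool \<Sigma>) \<in> ranks \<Sigma> (neg \<Sigma>)"
  by (unfold valid_setting_def, elim conjE, assumption)
lemma vsa3: "valid_setting \<Sigma> \<Longrightarrow> (\<forall>s. ([s, s], sBool \<Sigma>) \<in> ranks \<Sigma> (eqs \<Sigma> s))"
  by (unfold valid_setting_def, elim conjE, assumption)
lemma vs_ttff: "valid_setting \<Sigma> \<Longrightarrow> tt \<Sigma> \<noteq> ff \<Sigma>"
  by (unfold valid_setting_def, elim conjE, assumption)
lemma vs_canon_TT: "valid_setting \<Sigma> \<Longrightarrow> canon \<Sigma> (TT \<Sigma>) = TT \<Sigma>"
  by (unfold valid_setting_def, elim conjE, assumption)
lemma vs_canon_FF: "valid_setting \<Sigma> \<Longrightarrow> canon \<Sigma> (FF \<Sigma>) = FF \<Sigma>"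
  by (unfold valid_setting_def, elim conjE, assumption)
lemma vsa4: "valid_setting \<Sigma> \<Longrightarrow> (\<forall>b. ground b \<longrightarrow> has_sort \<Sigma> b (sBool \<Sigma>) \<longrightarrow> canon \<Sigma> b = TT \<Sigma> \<or> canon \<Sigma> b = FF \<Sigma>)"
  by (unfold valid_setting_def, elim conjE, assumption)
lemma vsa5: "valid_setting \<Sigma> \<Longrightarrow> (\<forall>b. ground b \<longrightarrow> has_sort \<Sigma> b (sBool \<Sigma>) \<longrightarrow>
        (canon \<Sigma> (Fn (neg \<Sigma>) [b]) = TT \<Sigma> \<longleftrightarrow> canon \<Sigma> b = FF \<Sigma>))"
  by (unfold valid_setting_def, elim conjE, assumption)
lemma vsa6: "valid_setting \<Sigma> \<Longrightarrow> (\<forall>s a b. ground a \<longrightarrow> ground b \<longrightarrow> has_sort \<Sigma> a s \<longrightarrow> has_sort \<Sigma> b s \<longrightarrow>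
        (canon \<Sigma> (Fn (eqs \<Sigma> s) [a, b]) = TT \<Sigma> \<longleftrightarrow> canon \<Sigma> a = canon \<Sigma> b))"
  by (unfold valid_setting_def, elim conjE, assumption)

lemma vs_refl: "valid_setting \<Sigma> \<Longrightarrow> leq \<Sigma> s s"
  using vsa1 by blast
lemma vs_trans: "valid_setting \<Sigma> \<Longrightarrow> leq \<Sigma> s1 s2 \<Longrightarrow> leq \<Sigma> s2 s3 \<Longrightarrow> leq \<Sigma> s1 s3"
  using vsa2 by blast
lemma vs_rank_eqs: "valid_setting \<Sigma> \<Longrightarrow> ([s, s], sBool \<Sigma>) \<in> ranks \<Sigma> (eqs \<Sigma> s)"
  using vsa3 by blast
lemma vs_TTFF: "valid_setting \<Sigma> \<Longrightarrow> TT \<Sigma> \<noteq> FF \<Sigma>"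
  using vs_ttff by auto
lemma vs_canon_bool: "valid_setting \<Sigma> \<Longrightarrow> ground b \<Longrightarrow> has_sort \<Sigma> b (sBool \<Sigma>) \<Longrightarrow>
   canon \<Sigma> b = TT \<Sigma> \<or> canon \<Sigma> b = FF \<Sigma>"
  using vsa4 by blast
lemma vs_neg: "valid_setting \<Sigma> \<Longrightarrow> ground b \<Longrightarrow> has_sort \<Sigma> b (sBool \<Sigma>) \<Longrightarrow>
   (canon \<Sigma> (Fn (neg \<Sigma>) [b]) = TT \<Sigma> \<longleftrightarrow> canon \<Sigma> b = FF \<Sigma>)"
  using vsa5 by blast
lemma vs_eq: "valid_setting \<Sigma> \<Longrightarrow> ground a \<Longrightarrow> ground b \<Longrightarrow> has_sort \<Sigma> a s \<Longrightarrow> has_sort \<Sigma> b s \<Longrightarrow>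
   (canon \<Sigma> (Fn (eqs \<Sigma> s) [a, b]) = TT \<Sigma> \<longleftrightarrow> canon \<Sigma> a = canon \<Sigma> b)"
  using vsa6 by blast

lemma has_sort_up: "has_sort \<Sigma> t s1 \<Longrightarrow> leq \<Sigma> s1 s2 \<Longrightarrow> valid_setting \<Sigma> \<Longrightarrow> has_sort \<Sigma> t s2"
  by (erule has_sort.cases) (auto intro: has_sort.intros dest: vs_trans)

lemma sort_TT: "valid_setting \<Sigma> \<Longrightarrow> has_sort \<Sigma> (TT \<Sigma>) (sBool \<Sigma>)"
  by (rule has_sort.hs_fn, erule vs_rank_tt) (auto simp: vs_refl)
lemma sort_FF: "valid_setting \<Sigma> \<Longrightarrow> has_sort \<Sigma> (FF \<Sigma>) (sBool \<Sigma>)"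
  by (rule has_sort.hs_fn, erule vs_rank_ff) (auto simp: vs_refl)

lemma sort_neg: "valid_setting \<Sigma> \<Longrightarrow> has_sort \<Sigma> b (sBool \<Sigma>) \<Longrightarrow> has_sort \<Sigma> (Fn (neg \<Sigma>) [b]) (sBool \<Sigma>)"
  by (rule has_sort.hs_fn, erule vs_rank_neg) (auto simp: vs_refl)

lemma sort_eqs: "valid_setting \<Sigma> \<Longrightarrow> has_sort \<Sigma> a s \<Longrightarrow> has_sort \<Sigma> b s \<Longrightarrow> has_sort \<Sigma> (Fn (eqs \<Sigma> s) [a, b]) (sBool \<Sigma>)"
  apply (rule has_sort.hs_fn, erule vs_rank_eqs)
  apply simp
  apply (simp add: less_Suc_eq nth_Cons')
  by (simp add: vs_refl)

lemma canon_neg_TT: "valid_setting \<Sigma> \<Longrightarrow> canon \<Sigma> (Fn (neg \<Sigma>) [TT \<Sigma>]) = FF \<Sigma>"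
proof -
  assume v: "valid_setting \<Sigma>"
  have g: "ground (Fn (neg \<Sigma>) [TT \<Sigma>])" by (simp add: ground_def)
  have s: "has_sort \<Sigma> (Fn (neg \<Sigma>) [TT \<Sigma>]) (sBool \<Sigma>)" using sort_neg sort_TT v by blast
  have "canon \<Sigma> (Fn (neg \<Sigma>) [TT \<Sigma>]) \<noteq> TT \<Sigma>"
    using vs_neg[OF v, of "TT \<Sigma>"] sort_TT[OF v] vs_canon_TT[OF v] vs_TTFF[OF v] by (simp add: ground_def)
  then show ?thesis using vs_canon_bool[OF v g s] by blast
qed

lemma canon_neg_FF: "valid_setting \<Sigma> \<Longrightarrow> canon \<Sigma> (Fn (neg \<Sigma>) [FF \<Sigma>]) = TT \<Sigma>"
  using vs_neg[of \<Sigma> "FF \<Sigma>"] sort_FF[of \<Sigma>] vs_canon_FF[of \<Sigma>] by (simp add: ground_def)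

lemma ground_Fn[simp]: "ground (Fn f ts) \<longleftrightarrow> (\<forall>t\<in>set ts. ground t)"
  unfolding ground_def by auto
lemma ground_Var[simp]: "\<not> ground (Var x)"
  unfolding ground_def by auto

lemma subst_ground: "ground t \<Longrightarrow> subst \<sigma> t = t"
proof (induction t)
  case (Var x)
  then show ?case by simp
next
  case (Fn f ts)
  then show ?case by (simp add: map_idI)
qed

lemma subst_ground2: "vars t \<subseteq> dom \<sigma> \<Longrightarrow> (\<forall>v b. \<sigma> v = Some b \<longrightarrow> ground b) \<Longrightarrow> ground (subst \<sigma> t)"
proof (induction t)
  case (Var x)
  then obtain b where "\<sigma> x = Some b" by auto
  then show ?case using Var by simp
next
  case (Fn f ts)
  then show ?case by auto
qed

lemma subst_sort:
  assumes "valid_setting \<Sigma>" "\<forall>v b. \<sigma> v = Some b \<longrightarrow> has_sort \<Sigma> b (vsort \<Sigma> v)"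
  shows "has_sort \<Sigma> t s \<Longrightarrow> has_sort \<Sigma> (subst \<sigma> t) s"
proof (induction rule: has_sort.induct)
  case (hs_var x s)
  show ?case
  proof (cases "\<sigma> x")
    case None
    then show ?thesis using hs_var by (auto intro: has_sort.intros)
  next
    case (Some b)
    then have "has_sort \<Sigma> b (vsort \<Sigma> x)" using assms(2) by blast
    then show ?thesis using Some hs_var has_sort_up assms(1) by auto
  qed
next
  case (hs_fn ss s0 f ts s)
  then show ?case by (auto intro!: has_sort.hs_fn)
qed

lemma subst_cong: "(\<forall>v\<in>vars t. \<sigma>1 v = \<sigma>2 v) \<Longrightarrow> subst \<sigma>1 t = subst \<sigma>2 t"
proof (induction t)
  case (Var x)
  then show ?case by simp
next
  case (Fn f ts)
  then show ?case by simp
qed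

lemma psubst_cong: "(\<forall>v\<in>pvars P. \<sigma>1 v = \<sigma>2 v) \<Longrightarrow> psubst \<sigma>1 P = psubst \<sigma>2 P"
proof -
  assume h: "\<forall>v\<in>pvars P. \<sigma>1 v = \<sigma>2 v"
  have "subst \<sigma>1 t = subst \<sigma>2 t" if "t \<in># pbang P + pquery P" for t
    using h that unfolding pvars_def by (intro subst_cong) blast
  then show ?thesis unfolding psubst_def
    by (metis (no_types, lifting) image_mset_cong union_iff)
qed

lemma csubst_cong: "(\<forall>v\<in>cvars \<psi>. \<sigma>1 v = \<sigma>2 v) \<Longrightarrow> csubst \<sigma>1 \<psi> = csubst \<sigma>2 \<psi>"
proof (induction \<psi>)
  case (CAtom B)
  then show ?case using subst_cong[of B \<sigma>1 \<sigma>2] by simp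
next
  case (CEx P \<psi>)
  then show ?case using psubst_cong[of P \<sigma>1 \<sigma>2] by simp
qed auto

lemma qsubst_cong: "(\<forall>v\<in>qvars Q. \<sigma>1 v = \<sigma>2 v) \<Longrightarrow> qsubst \<sigma>1 Q = qsubst \<sigma>2 Q"
proof (induction Q)
  case (QFact f)
  then show ?case using subst_cong[of f \<sigma>1 \<sigma>2] by simp
next
  case (QImp \<phi> R)
  then show ?case using csubst_cong[of \<phi> \<sigma>1 \<sigma>2] by simp
next
  case (QFrom P R)
  then show ?case using psubst_cong[of P \<sigma>1 \<sigma>2] by simp
qed auto

lemma wf_pat_subst:
  assumes v: "valid_setting \<Sigma>" and h: "\<forall>v b. \<sigma> v = Some b \<longrightarrow> has_sort \<Sigma> b (vsort \<Sigma> v)"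
    and w: "wf_pat \<Sigma> P"
  shows "wf_pat \<Sigma> (psubst \<sigma> P)"
proof -
  have ne: "pquery P \<noteq> {#}" and s: "\<forall>t\<in>#pbang P + pquery P. has_sort \<Sigma> t (sFact \<Sigma>)"
    using w unfolding wf_pat_def by auto
  have "\<forall>t\<in>#image_mset (subst \<sigma>) (pbang P) + image_mset (subst \<sigma>) (pquery P). has_sort \<Sigma> t (sFact \<Sigma>)"
  proof
    fix t assume "t \<in># image_mset (subst \<sigma>) (pbang P) + image_mset (subst \<sigma>) (pquery P)"
    then obtain t0 where "t0 \<in># pbang P + pquery P" "t = subst \<sigma> t0" by auto
    then show "has_sort \<Sigma> t (sFact \<Sigma>)" using s subst_sort[OF v h] by blast
  qed
  then show ?thesis using ne unfolding wf_pat_def psubst_def by simp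
qed

lemma wf_cond_subst:
  assumes v: "valid_setting \<Sigma>" and h: "\<forall>v b. \<sigma> v = Some b \<longrightarrow> has_sort \<Sigma> b (vsort \<Sigma> v)"
  shows "wf_cond \<Sigma> \<psi> \<Longrightarrow> wf_cond \<Sigma> (csubst \<sigma> \<psi>)"
  by (induction \<psi>) (simp_all add: subst_sort[OF v h] wf_pat_subst[OF v h])

lemma wf_query_subst:
  assumes v: "valid_setting \<Sigma>" and h: "\<forall>v b. \<sigma> v = Some b \<longrightarrow> has_sort \<Sigma> b (vsort \<Sigma> v)"
  shows "wf_query \<Sigma> Q \<Longrightarrow> wf_query \<Sigma> (qsubst \<sigma> Q)"
  by (induction Q) (simp_all add: subst_sort[OF v h] wf_pat_subst[OF v h] wf_cond_subst[OF v h])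

lemma gsub_ext:
  assumes "gsub \<Sigma> \<sigma> (dom \<sigma>)" "match_ext \<Sigma> \<sigma> P \<beta>"
  shows "gsub \<Sigma> (\<sigma> ++ \<beta>) (dom (\<sigma> ++ \<beta>)) \<and> dom (\<sigma> ++ \<beta>) = dom \<sigma> \<union> pvars P"
proof -
  have a: "\<forall>v b. \<sigma> v = Some b \<longrightarrow> ground b \<and> has_sort \<Sigma> b (vsort \<Sigma> v)"
    and b: "\<forall>v b. \<beta> v = Some b \<longrightarrow> ground b \<and> has_sort \<Sigma> b (vsort \<Sigma> v)"
    and d: "dom \<beta> = pvars P - dom \<sigma>"
    using assms unfolding gsub_def match_ext_def by auto
  have "\<forall>v b. (\<sigma> ++ \<beta>) v = Some b \<longrightarrow> ground b \<and> has_sort \<Sigma> b (vsort \<Sigma> v)"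
    using a b by (simp add: map_add_Some_iff) blast
  moreover have "dom (\<sigma> ++ \<beta>) = dom \<sigma> \<union> pvars P" using d by auto
  ultimately show ?thesis unfolding gsub_def by simp
qed

lemma size_dec:
  assumes "wf_pat \<Sigma> P" "F' = F'' + inst \<Sigma> \<sigma>' (pbang P + pquery P)"
  shows "size (F'' + inst \<Sigma> \<sigma>' (pbang P)) < size F'"
proof -
  have "pquery P \<noteq> {#}" using assms(1) unfolding wf_pat_def by blast
  then have "size (pquery P) > 0" by (simp add: nonempty_has_size)
  then show ?thesis using assms(2) unfolding inst_def by simp
qed

lemma exeval_nomatch:
  assumes "\<not> has_match \<Sigma> F' \<sigma> P"
  shows "exeval \<Sigma> F F' \<sigma> P \<psi> B \<longleftrightarrow> B = FF \<Sigma>"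
proof
  assume "exeval \<Sigma> F F' \<sigma> P \<psi> B"
  then show "B = FF \<Sigma>" unfolding exeval_unfold[of \<Sigma> F F' \<sigma> P \<psi> B]
  proof (elim disjE exE conjE)
    fix \<beta> F'' assume "match_ext \<Sigma> \<sigma> P \<beta>" "F' = F'' + inst \<Sigma> (\<sigma> ++ \<beta>) (pbang P + pquery P)"
    then have "has_match \<Sigma> F' \<sigma> P" unfolding has_match_def by blast
    then show ?thesis using assms by blast
  qed (use assms in \<open>auto simp: has_match_def\<close>)
next
  assume "B = FF \<Sigma>"
  then show "exeval \<Sigma> F F' \<sigma> P \<psi> B" unfolding exeval_unfold[of \<Sigma> F F' \<sigma> P \<psi> B] using assms by blast
qed

lemma qfr_nomatch:
  assumes "\<not> has_match \<Sigma> F' \<sigma> P"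
  shows "qfr \<Sigma> F F' \<sigma> P R A A' \<longleftrightarrow> A' = A"
proof
  assume "qfr \<Sigma> F F' \<sigma> P R A A'"
  then show "A' = A" unfolding qfr_unfold[of \<Sigma> F F' \<sigma> P R A A']
  proof (elim disjE exE conjE)
    fix \<beta> F'' assume "match_ext \<Sigma> \<sigma> P \<beta>" "F' = F'' + inst \<Sigma> (\<sigma> ++ \<beta>) (pbang P + pquery P)"
    then have "has_match \<Sigma> F' \<sigma> P" unfolding has_match_def by blast
    then show ?thesis using assms by blast
  qed
next
  assume "A' = A"
  then show "qfr \<Sigma> F F' \<sigma> P R A A'" unfolding qfr_unfold[of \<Sigma> F F' \<sigma> P R A A'] using assms by blast
qed

lemma cond_good:
  assumes v: "valid_setting \<Sigma>"
  shows "gsub \<Sigma> \<sigma> (dom \<sigma>) \<Longrightarrow> cclosed (dom \<sigma>) \<psi> \<Longrightarrow> wf_cond \<Sigma> \<psi> \<Longrightarrow>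
    (\<exists>B. ceval \<Sigma> F \<sigma> \<psi> B) \<and> (\<forall>B. ceval \<Sigma> F \<sigma> \<psi> B \<longrightarrow> B = TT \<Sigma> \<or> B = FF \<Sigma>)"
proof (induction \<psi> arbitrary: \<sigma>)
  case CFalse
  then show ?case by (simp add: ceval_CFalse)
next
  case (CAtom B0)
  have g: "ground (subst \<sigma> B0)"
    using CAtom.prems subst_ground2[of B0 \<sigma>] unfolding gsub_def by auto
  have s: "has_sort \<Sigma> (subst \<sigma> B0) (sBool \<Sigma>)"
    using CAtom.prems subst_sort[OF v, of \<sigma>] unfolding gsub_def by auto
  show ?case using vs_canon_bool[OF v g s] by (simp add: ceval_CAtom)
next
  case (CNot \<psi>)
  then have ih: "(\<exists>B. ceval \<Sigma> F \<sigma> \<psi> B) \<and> (\<forall>B. ceval \<Sigma> F \<sigma> \<psi> B \<longrightarrow> B = TT \<Sigma> \<or> B = FF \<Sigma>)" by simp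
  obtain B1 where b1: "ceval \<Sigma> F \<sigma> \<psi> B1" using ih by blast
  have e: "\<exists>B. ceval \<Sigma> F \<sigma> (CNot \<psi>) B" using b1 unfolding ceval_CNot by blast
  have "B = TT \<Sigma> \<or> B = FF \<Sigma>" if hB: "ceval \<Sigma> F \<sigma> (CNot \<psi>) B" for B
  proof -
    obtain B2 where "ceval \<Sigma> F \<sigma> \<psi> B2" "B = canon \<Sigma> (Fn (neg \<Sigma>) [B2])"
      using hB unfolding ceval_CNot by blast
    moreover have "B2 = TT \<Sigma> \<or> B2 = FF \<Sigma>" using ih calculation(1) by blast
    ultimately show ?thesis using canon_neg_TT[OF v] canon_neg_FF[OF v] by auto
  qed
  then show ?case using e by blast
next
  case (COr \<psi>1 \<psi>2)
  then have ih1: "(\<exists>B. ceval \<Sigma> F \<sigma> \<psi>1 B) \<and> (\<forall>B. ceval \<Sigma> F \<sigma> \<psi>1 B \<longrightarrow> B = TT \<Sigma> \<or> B = FF \<Sigma>)"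
    and ih2: "(\<exists>B. ceval \<Sigma> F \<sigma> \<psi>2 B) \<and> (\<forall>B. ceval \<Sigma> F \<sigma> \<psi>2 B \<longrightarrow> B = TT \<Sigma> \<or> B = FF \<Sigma>)" by simp_all
  show ?case
  proof
    obtain B2 where b2: "ceval \<Sigma> F \<sigma> \<psi>2 B2" using ih2 by blast
    obtain B1 where b1: "ceval \<Sigma> F \<sigma> \<psi>1 B1" using ih1 by blast
    have "B2 = TT \<Sigma> \<or> B2 = FF \<Sigma>" using ih2 b2 by blast
    then show "\<exists>B. ceval \<Sigma> F \<sigma> (COr \<psi>1 \<psi>2) B"
    proof
      assume "B2 = TT \<Sigma>"
      then have "ceval \<Sigma> F \<sigma> (COr \<psi>1 \<psi>2) (TT \<Sigma>)" unfolding ceval_COr using b2 by blast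
      then show ?thesis by blast
    next
      assume "B2 = FF \<Sigma>"
      then have "ceval \<Sigma> F \<sigma> (COr \<psi>1 \<psi>2) B1" unfolding ceval_COr using b2 b1 by blast
      then show ?thesis by blast
    qed
  next
    show "\<forall>B. ceval \<Sigma> F \<sigma> (COr \<psi>1 \<psi>2) B \<longrightarrow> B = TT \<Sigma> \<or> B = FF \<Sigma>"
    proof (intro allI impI)
      fix B assume "ceval \<Sigma> F \<sigma> (COr \<psi>1 \<psi>2) B"
      then obtain B2 where "ceval \<Sigma> F \<sigma> \<psi>2 B2" "B2 = TT \<Sigma> \<and> B = TT \<Sigma> \<or> B2 = FF \<Sigma> \<and> ceval \<Sigma> F \<sigma> \<psi>1 B"
        unfolding ceval_COr by blast
      then show "B = TT \<Sigma> \<or> B = FF \<Sigma>" using ih1 by blast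
    qed
  qed
next
  case (CEx P \<psi>)
  have wp: "wf_pat \<Sigma> P" and wpsi: "wf_cond \<Sigma> \<psi>" and cl: "cclosed (dom \<sigma> \<union> pvars P) \<psi>"
    using CEx.prems(2,3) by simp_all
  have ihb: "(\<exists>B. ceval \<Sigma> F (\<sigma> ++ \<beta>) \<psi> B) \<and> (\<forall>B. ceval \<Sigma> F (\<sigma> ++ \<beta>) \<psi> B \<longrightarrow> B = TT \<Sigma> \<or> B = FF \<Sigma>)"
    if "match_ext \<Sigma> \<sigma> P \<beta>" for \<beta>
  proof -
    note gd = gsub_ext[OF CEx.prems(1) that]
    have g: "gsub \<Sigma> (\<sigma> ++ \<beta>) (dom (\<sigma> ++ \<beta>))" by (rule conjunct1[OF gd])
    have d: "dom (\<sigma> ++ \<beta>) = dom \<sigma> \<union> pvars P" by (rule conjunct2[OF gd])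
    have c: "cclosed (dom (\<sigma> ++ \<beta>)) \<psi>" unfolding d by (rule cl)
    show ?thesis by (rule CEx.IH[OF g c wpsi])
  qed
  have "(\<exists>B. exeval \<Sigma> F F' \<sigma> P \<psi> B) \<and> (\<forall>B. exeval \<Sigma> F F' \<sigma> P \<psi> B \<longrightarrow> B = TT \<Sigma> \<or> B = FF \<Sigma>)" for F'
  proof (induction F' rule: measure_induct_rule[of size])
    case (less F')
    show ?case
    proof (cases "has_match \<Sigma> F' \<sigma> P")
      case False
      then show ?thesis using exeval_nomatch[OF False] by blast
    next
      case True
      then obtain \<beta> F'' where m: "match_ext \<Sigma> \<sigma> P \<beta>" "F' = F'' + inst \<Sigma> (\<sigma> ++ \<beta>) (pbang P + pquery P)"
        unfolding has_match_def by blast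
      have ex: "\<exists>B. exeval \<Sigma> F F' \<sigma> P \<psi> B"
      proof -
        obtain B1 where b1: "ceval \<Sigma> F (\<sigma> ++ \<beta>) \<psi> B1" "B1 = TT \<Sigma> \<or> B1 = FF \<Sigma>" using ihb[OF m(1)] by blast
        obtain B where eb: "exeval \<Sigma> F (F'' + inst \<Sigma> (\<sigma> ++ \<beta>) (pbang P)) \<sigma> P \<psi> B"
          using less[of "F'' + inst \<Sigma> (\<sigma> ++ \<beta>) (pbang P)"] size_dec[OF wp m(2)] by blast
        then show ?thesis
        proof (cases "B1 = TT \<Sigma>")
          case True
          then have "exeval \<Sigma> F F' \<sigma> P \<psi> (TT \<Sigma>)"
            unfolding exeval_unfold[of \<Sigma> F F' \<sigma> P \<psi>] using b1 m by blast
          then show ?thesis by blast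
        next
          case False
          then have "B1 = FF \<Sigma>" using b1 by blast
          then have "exeval \<Sigma> F F' \<sigma> P \<psi> B"
            unfolding exeval_unfold[of \<Sigma> F F' \<sigma> P \<psi>] using b1 m eb by blast
          then show ?thesis by blast
        qed
      qed
      have bo: "\<forall>B. exeval \<Sigma> F F' \<sigma> P \<psi> B \<longrightarrow> B = TT \<Sigma> \<or> B = FF \<Sigma>"
      proof (intro allI impI)
        fix B assume "exeval \<Sigma> F F' \<sigma> P \<psi> B"
        then have "(\<not> has_match \<Sigma> F' \<sigma> P \<and> B = FF \<Sigma>) \<or>
          (\<exists>\<beta> F''. match_ext \<Sigma> \<sigma> P \<beta> \<and> F' = F'' + inst \<Sigma> (\<sigma> ++ \<beta>) (pbang P + pquery P) \<and>
            (\<exists>B1. ceval \<Sigma> F (\<sigma> ++ \<beta>) \<psi> B1 \<and>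
               (B1 = TT \<Sigma> \<and> B = TT \<Sigma> \<or> B1 = FF \<Sigma> \<and> exeval \<Sigma> F (F'' + inst \<Sigma> (\<sigma> ++ \<beta>) (pbang P)) \<sigma> P \<psi> B)))"
          by (simp only: exeval_unfold[of \<Sigma> F F' \<sigma> P \<psi>])
        then show "B = TT \<Sigma> \<or> B = FF \<Sigma>"
        proof (elim disjE exE conjE)
          fix \<beta>' F3 B1
          assume "F' = F3 + inst \<Sigma> (\<sigma> ++ \<beta>') (pbang P + pquery P)"
            and "exeval \<Sigma> F (F3 + inst \<Sigma> (\<sigma> ++ \<beta>') (pbang P)) \<sigma> P \<psi> B"
          then show ?thesis using less[of "F3 + inst \<Sigma> (\<sigma> ++ \<beta>') (pbang P)"] size_dec[OF wp] by blast
        qed auto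
      qed
      show ?thesis using ex bo by blast
    qed
  qed
  then show ?case by (simp add: ceval_CEx)
qed

fun tr :: "('s,'f,'v) setting \<Rightarrow> ('f,'v) query \<Rightarrow> ('f,'v) trm \<Rightarrow> ('f,'v) cond" where
  "tr \<Sigma> QEmpty w = CFalse"
| "tr \<Sigma> (QFact f) w = CAtom (Fn (eqs \<Sigma> (sFact \<Sigma>)) [f, w])"
| "tr \<Sigma> (QPlus R1 R2) w = COr (tr \<Sigma> R1 w) (tr \<Sigma> R2 w)"
| "tr \<Sigma> (QImp \<phi> R) w = CNot (COr (CNot \<phi>) (CNot (tr \<Sigma> R w)))"
| "tr \<Sigma> (QFrom P R) w = CEx P (tr \<Sigma> R w)"

lemma tr_closed: "qclosed V R \<Longrightarrow> ground w \<Longrightarrow> cclosed V (tr \<Sigma> R w)"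
  by (induction R arbitrary: V) (auto simp: ground_def)

lemma tr_wf: "valid_setting \<Sigma> \<Longrightarrow> has_sort \<Sigma> w (sFact \<Sigma>) \<Longrightarrow> wf_query \<Sigma> R \<Longrightarrow> wf_cond \<Sigma> (tr \<Sigma> R w)"
  by (induction R) (auto intro: sort_eqs)

lemma tr_det: "qdet \<Sigma> R \<Longrightarrow> cdet \<Sigma> (tr \<Sigma> R w)"
  by (induction R) auto

lemma tr_subst: "csubst \<sigma> (tr \<Sigma> R w) = tr \<Sigma> (qsubst \<sigma> R) (subst \<sigma> w)"
  by (induction R) auto

lemma ceval_not_TT:
  assumes v: "valid_setting \<Sigma>" and b: "\<forall>B. ceval \<Sigma> F \<sigma> \<psi> B \<longrightarrow> B = TT \<Sigma> \<or> B = FF \<Sigma>"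
  shows "ceval \<Sigma> F \<sigma> (CNot \<psi>) (TT \<Sigma>) \<longleftrightarrow> ceval \<Sigma> F \<sigma> \<psi> (FF \<Sigma>)"
proof
  assume "ceval \<Sigma> F \<sigma> (CNot \<psi>) (TT \<Sigma>)"
  then obtain B1 where 1: "ceval \<Sigma> F \<sigma> \<psi> B1" and 2: "TT \<Sigma> = canon \<Sigma> (Fn (neg \<Sigma>) [B1])"
    unfolding ceval_CNot by blast
  have "B1 = TT \<Sigma> \<or> B1 = FF \<Sigma>" using b 1 by blast
  moreover have "B1 \<noteq> TT \<Sigma>" using 2 canon_neg_TT[OF v] vs_TTFF[OF v] by auto
  ultimately show "ceval \<Sigma> F \<sigma> \<psi> (FF \<Sigma>)" using 1 by auto
next
  assume "ceval \<Sigma> F \<sigma> \<psi> (FF \<Sigma>)"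
  then show "ceval \<Sigma> F \<sigma> (CNot \<psi>) (TT \<Sigma>)" unfolding ceval_CNot using canon_neg_FF[OF v] by auto
qed

lemma ceval_not_FF:
  assumes v: "valid_setting \<Sigma>" and b: "\<forall>B. ceval \<Sigma> F \<sigma> \<psi> B \<longrightarrow> B = TT \<Sigma> \<or> B = FF \<Sigma>"
  shows "ceval \<Sigma> F \<sigma> (CNot \<psi>) (FF \<Sigma>) \<longleftrightarrow> ceval \<Sigma> F \<sigma> \<psi> (TT \<Sigma>)"
proof
  assume "ceval \<Sigma> F \<sigma> (CNot \<psi>) (FF \<Sigma>)"
  then obtain B1 where 1: "ceval \<Sigma> F \<sigma> \<psi> B1" and 2: "FF \<Sigma> = canon \<Sigma> (Fn (neg \<Sigma>) [B1])"
    unfolding ceval_CNot by blast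
  have "B1 = TT \<Sigma> \<or> B1 = FF \<Sigma>" using b 1 by blast
  moreover have "B1 \<noteq> FF \<Sigma>" using 2 canon_neg_FF[OF v] vs_TTFF[OF v] by auto
  ultimately show "ceval \<Sigma> F \<sigma> \<psi> (TT \<Sigma>)" using 1 by auto
next
  assume "ceval \<Sigma> F \<sigma> \<psi> (TT \<Sigma>)"
  then show "ceval \<Sigma> F \<sigma> (CNot \<psi>) (FF \<Sigma>)" unfolding ceval_CNot using canon_neg_TT[OF v] by auto
qed

lemma ceval_or_TT:
  assumes "ceval \<Sigma> F \<sigma> \<psi>2 (TT \<Sigma>) \<or> ceval \<Sigma> F \<sigma> \<psi>2 (FF \<Sigma>)"
  shows "ceval \<Sigma> F \<sigma> (COr \<psi>1 \<psi>2) (TT \<Sigma>) \<longleftrightarrow> ceval \<Sigma> F \<sigma> \<psi>1 (TT \<Sigma>) \<or> ceval \<Sigma> F \<sigma> \<psi>2 (TT \<Sigma>)"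
  unfolding ceval_COr using assms by blast

lemma ceval_or_FF:
  assumes "TT \<Sigma> \<noteq> FF \<Sigma>"
  shows "ceval \<Sigma> F \<sigma> (COr \<psi>1 \<psi>2) (FF \<Sigma>) \<longleftrightarrow> ceval \<Sigma> F \<sigma> \<psi>1 (FF \<Sigma>) \<and> ceval \<Sigma> F \<sigma> \<psi>2 (FF \<Sigma>)"
proof -
  have "FF \<Sigma> \<noteq> TT \<Sigma>" using assms by metis
  then show ?thesis unfolding ceval_COr by auto
qed

lemma tot_from:
  assumes "\<forall>A. \<exists>A'. Q A A'"
    and "\<forall>A. (\<exists>A'. Q A A' \<and> u \<in># A') \<longleftrightarrow> u \<in># A \<or> T"
    and "\<forall>A. (\<exists>A'. Q A A' \<and> u \<notin># A') \<longleftrightarrow> u \<notin># A \<and> Fa"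
  shows "T \<or> Fa"
proof -
  obtain A' where q: "Q {#} A'" using assms(1) by blast
  show ?thesis
  proof (cases "u \<in># A'")
    case True
    then have "\<exists>A''. Q {#} A'' \<and> u \<in># A''" using q by blast
    then have "u \<in># {#} \<or> T" using assms(2) by blast
    then show ?thesis by simp
  next
    case False
    then have "\<exists>A''. Q {#} A'' \<and> u \<notin># A''" using q by blast
    then have "u \<notin># {#} \<and> Fa" using assms(3) by blast
    then show ?thesis by simp
  qed
qed

lemma qfr_intro:
  "match_ext \<Sigma> \<sigma> P \<beta> \<Longrightarrow> F' = F'' + inst \<Sigma> (\<sigma> ++ \<beta>) (pbang P + pquery P) \<Longrightarrow>
   qev \<Sigma> F (\<sigma> ++ \<beta>) R A A1 \<Longrightarrow> qfr \<Sigma> F (F'' + inst \<Sigma> (\<sigma> ++ \<beta>) (pbang P)) \<sigma> P R A1 A' \<Longrightarrow>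
   qfr \<Sigma> F F' \<sigma> P R A A'"
  by (subst qfr_unfold) (rule disjI2, intro exI conjI, assumption+)

lemma qfr_elim:
  assumes "qfr \<Sigma> F F' \<sigma> P R A A'" "has_match \<Sigma> F' \<sigma> P"
  obtains \<beta> F'' A1 where "match_ext \<Sigma> \<sigma> P \<beta>" "F' = F'' + inst \<Sigma> (\<sigma> ++ \<beta>) (pbang P + pquery P)"
    "qev \<Sigma> F (\<sigma> ++ \<beta>) R A A1" "qfr \<Sigma> F (F'' + inst \<Sigma> (\<sigma> ++ \<beta>) (pbang P)) \<sigma> P R A1 A'"
  using assms(1) unfolding qfr_unfold[of \<Sigma> F F' \<sigma> P R A A'] using assms(2) by blast

lemma exeval_intro_TT:
  "match_ext \<Sigma> \<sigma> P \<beta> \<Longrightarrow> F' = F'' + inst \<Sigma> (\<sigma> ++ \<beta>) (pbang P + pquery P) \<Longrightarrow>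
   ceval \<Sigma> F (\<sigma> ++ \<beta>) \<psi> (TT \<Sigma>) \<Longrightarrow> exeval \<Sigma> F F' \<sigma> P \<psi> (TT \<Sigma>)"
  by (subst exeval_unfold) (rule disjI2, intro exI conjI, assumption+, simp)

lemma exeval_intro_FF:
  "match_ext \<Sigma> \<sigma> P \<beta> \<Longrightarrow> F' = F'' + inst \<Sigma> (\<sigma> ++ \<beta>) (pbang P + pquery P) \<Longrightarrow>
   ceval \<Sigma> F (\<sigma> ++ \<beta>) \<psi> (FF \<Sigma>) \<Longrightarrow> exeval \<Sigma> F (F'' + inst \<Sigma> (\<sigma> ++ \<beta>) (pbang P)) \<sigma> P \<psi> B \<Longrightarrow>
   exeval \<Sigma> F F' \<sigma> P \<psi> B"
  by (subst exeval_unfold) (rule disjI2, intro exI conjI, assumption+, simp)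

lemma exeval_elim:
  assumes "exeval \<Sigma> F F' \<sigma> P \<psi> B" "has_match \<Sigma> F' \<sigma> P"
  obtains \<beta> F'' B1 where "match_ext \<Sigma> \<sigma> P \<beta>" "F' = F'' + inst \<Sigma> (\<sigma> ++ \<beta>) (pbang P + pquery P)"
    "ceval \<Sigma> F (\<sigma> ++ \<beta>) \<psi> B1"
    "B1 = TT \<Sigma> \<and> B = TT \<Sigma> \<or> B1 = FF \<Sigma> \<and> exeval \<Sigma> F (F'' + inst \<Sigma> (\<sigma> ++ \<beta>) (pbang P)) \<sigma> P \<psi> B"
  using assms(1) unfolding exeval_unfold[of \<Sigma> F F' \<sigma> P \<psi> B] using assms(2) by blast

lemma q_main:
  assumes v: "valid_setting \<Sigma>" and gw: "ground w" and sw: "has_sort \<Sigma> w (sFact \<Sigma>)"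
  shows "gsub \<Sigma> \<sigma> (dom \<sigma>) \<Longrightarrow> qclosed (dom \<sigma>) R \<Longrightarrow> wf_query \<Sigma> R \<Longrightarrow>
    (\<forall>A. \<exists>A'. qev \<Sigma> F \<sigma> R A A') \<and>
    (\<forall>A. (\<exists>A'. qev \<Sigma> F \<sigma> R A A' \<and> canon \<Sigma> w \<in># A') \<longleftrightarrow> canon \<Sigma> w \<in># A \<or> ceval \<Sigma> F \<sigma> (tr \<Sigma> R w) (TT \<Sigma>)) \<and>
    (\<forall>A. (\<exists>A'. qev \<Sigma> F \<sigma> R A A' \<and> canon \<Sigma> w \<notin># A') \<longleftrightarrow> canon \<Sigma> w \<notin># A \<and> ceval \<Sigma> F \<sigma> (tr \<Sigma> R w) (FF \<Sigma>))"
proof (induction R arbitrary: \<sigma>)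
  case QEmpty
  have ne: "TT \<Sigma> \<noteq> FF \<Sigma>" by (rule vs_TTFF[OF v])
  show ?case using ne by (simp add: qev_QEmpty ceval_CFalse)
next
  case (QFact f)
  define g where "g = subst \<sigma> f"
  have gg: "ground g" unfolding g_def
    using QFact.prems(1,2) subst_ground2[of f \<sigma>] unfolding gsub_def by auto
  have sg: "has_sort \<Sigma> g (sFact \<Sigma>)" unfolding g_def
    using QFact.prems(1,3) subst_sort[OF v, of \<sigma>] unfolding gsub_def by auto
  have ge: "ground (Fn (eqs \<Sigma> (sFact \<Sigma>)) [g, w])" using gg gw by simp
  have se: "has_sort \<Sigma> (Fn (eqs \<Sigma> (sFact \<Sigma>)) [g, w]) (sBool \<Sigma>)" using sort_eqs[OF v sg sw] .
  have e1: "canon \<Sigma> (Fn (eqs \<Sigma> (sFact \<Sigma>)) [g, w]) = TT \<Sigma> \<longleftrightarrow> canon \<Sigma> g = canon \<Sigma> w"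
    by (rule vs_eq[OF v gg gw sg sw])
  have e2: "canon \<Sigma> (Fn (eqs \<Sigma> (sFact \<Sigma>)) [g, w]) = FF \<Sigma> \<longleftrightarrow> canon \<Sigma> g \<noteq> canon \<Sigma> w"
    using e1 vs_canon_bool[OF v ge se] vs_TTFF[OF v] by auto
  have ce: "ceval \<Sigma> F \<sigma> (tr \<Sigma> (QFact f) w) B \<longleftrightarrow> B = canon \<Sigma> (Fn (eqs \<Sigma> (sFact \<Sigma>)) [g, w])" for B
    by (simp add: ceval_CAtom subst_ground[OF gw] g_def)
  have qe: "qev \<Sigma> F \<sigma> (QFact f) A A' \<longleftrightarrow> A' = A + {# canon \<Sigma> g #}" for A A'
    by (simp add: qev_QFact g_def)
  define X where "X = canon \<Sigma> (Fn (eqs \<Sigma> (sFact \<Sigma>)) [g, w])"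
  have e1': "TT \<Sigma> = X \<longleftrightarrow> canon \<Sigma> g = canon \<Sigma> w" using e1 unfolding X_def by metis
  have e2': "FF \<Sigma> = X \<longleftrightarrow> canon \<Sigma> g \<noteq> canon \<Sigma> w" using e2 unfolding X_def by metis
  have Y: "(\<exists>A'. qev \<Sigma> F \<sigma> (QFact f) A A' \<and> canon \<Sigma> w \<in># A') \<longleftrightarrow> canon \<Sigma> w \<in># A \<or> ceval \<Sigma> F \<sigma> (tr \<Sigma> (QFact f) w) (TT \<Sigma>)" for A
    unfolding ce qe X_def[symmetric] using e1' by auto
  have N: "(\<exists>A'. qev \<Sigma> F \<sigma> (QFact f) A A' \<and> canon \<Sigma> w \<notin># A') \<longleftrightarrow> canon \<Sigma> w \<notin># A \<and> ceval \<Sigma> F \<sigma> (tr \<Sigma> (QFact f) w) (FF \<Sigma>)" for A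
    unfolding ce qe X_def[symmetric] using e2' by auto
  have T: "\<exists>A'. qev \<Sigma> F \<sigma> (QFact f) A A'" for A unfolding qe by blast
  show ?case using T Y N by blast
next
  case (QPlus R1 R2)
  have c1: "qclosed (dom \<sigma>) R1" and c2: "qclosed (dom \<sigma>) R2"
    and w1: "wf_query \<Sigma> R1" and w2: "wf_query \<Sigma> R2" using QPlus.prems(2,3) by simp_all
  note IH1 = QPlus.IH(1)[OF QPlus.prems(1) c1 w1]
  note IH2 = QPlus.IH(2)[OF QPlus.prems(1) c2 w2]
  note t1 = IH1[THEN conjunct1] and y1 = IH1[THEN conjunct2, THEN conjunct1] and n1 = IH1[THEN conjunct2, THEN conjunct2]
  note t2 = IH2[THEN conjunct1] and y2 = IH2[THEN conjunct2, THEN conjunct1] and n2 = IH2[THEN conjunct2, THEN conjunct2]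
  define u where "u = canon \<Sigma> w"
  define c1 where "c1 = tr \<Sigma> R1 w"
  define c2 where "c2 = tr \<Sigma> R2 w"
  have tc2: "ceval \<Sigma> F \<sigma> c2 (TT \<Sigma>) \<or> ceval \<Sigma> F \<sigma> c2 (FF \<Sigma>)"
    unfolding c2_def by (rule tot_from[OF t2 y2 n2])
  have orT: "ceval \<Sigma> F \<sigma> (tr \<Sigma> (QPlus R1 R2) w) (TT \<Sigma>) \<longleftrightarrow> ceval \<Sigma> F \<sigma> c1 (TT \<Sigma>) \<or> ceval \<Sigma> F \<sigma> c2 (TT \<Sigma>)"
    unfolding c1_def c2_def tr.simps using ceval_or_TT tc2 unfolding c2_def by blast
  have orF: "ceval \<Sigma> F \<sigma> (tr \<Sigma> (QPlus R1 R2) w) (FF \<Sigma>) \<longleftrightarrow> ceval \<Sigma> F \<sigma> c1 (FF \<Sigma>) \<and> ceval \<Sigma> F \<sigma> c2 (FF \<Sigma>)"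
    unfolding c1_def c2_def tr.simps by (rule ceval_or_FF[OF vs_TTFF[OF v]])
  note y1 = y1[folded u_def c1_def] and n1 = n1[folded u_def c1_def]
  note y2 = y2[folded u_def c2_def] and n2 = n2[folded u_def c2_def]
  have T: "\<exists>A'. qev \<Sigma> F \<sigma> (QPlus R1 R2) A A'" for A
  proof -
    obtain A1 where "qev \<Sigma> F \<sigma> R1 A A1" using t1 by blast
    moreover obtain A' where "qev \<Sigma> F \<sigma> R2 A1 A'" using t2 by blast
    ultimately show ?thesis unfolding qev_QPlus by blast
  qed
  have Y: "(\<exists>A'. qev \<Sigma> F \<sigma> (QPlus R1 R2) A A' \<and> u \<in># A') \<longleftrightarrow> u \<in># A \<or> ceval \<Sigma> F \<sigma> (tr \<Sigma> (QPlus R1 R2) w) (TT \<Sigma>)" for A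
  proof
    assume "\<exists>A'. qev \<Sigma> F \<sigma> (QPlus R1 R2) A A' \<and> u \<in># A'"
    then obtain A1 A' where q1: "qev \<Sigma> F \<sigma> R1 A A1" and q2: "qev \<Sigma> F \<sigma> R2 A1 A'" and uA: "u \<in># A'"
      unfolding qev_QPlus by blast
    have "u \<in># A1 \<or> ceval \<Sigma> F \<sigma> c2 (TT \<Sigma>)" using y2 q2 uA by blast
    then show "u \<in># A \<or> ceval \<Sigma> F \<sigma> (tr \<Sigma> (QPlus R1 R2) w) (TT \<Sigma>)"
    proof
      assume "u \<in># A1"
      then have "u \<in># A \<or> ceval \<Sigma> F \<sigma> c1 (TT \<Sigma>)" using y1 q1 by blast
      then show ?thesis using orT by blast
    qed (use orT in blast)
  next
    assume h: "u \<in># A \<or> ceval \<Sigma> F \<sigma> (tr \<Sigma> (QPlus R1 R2) w) (TT \<Sigma>)"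
    have "(u \<in># A \<or> ceval \<Sigma> F \<sigma> c1 (TT \<Sigma>)) \<or> ceval \<Sigma> F \<sigma> c2 (TT \<Sigma>)" using h orT by blast
    then show "\<exists>A'. qev \<Sigma> F \<sigma> (QPlus R1 R2) A A' \<and> u \<in># A'"
    proof
      assume "u \<in># A \<or> ceval \<Sigma> F \<sigma> c1 (TT \<Sigma>)"
      then obtain A1 where q1: "qev \<Sigma> F \<sigma> R1 A A1" and "u \<in># A1" using y1 by blast
      then obtain A' where "qev \<Sigma> F \<sigma> R2 A1 A'" "u \<in># A'" using y2 by blast
      then show ?thesis using q1 unfolding qev_QPlus by blast
    next
      assume c: "ceval \<Sigma> F \<sigma> c2 (TT \<Sigma>)"
      obtain A1 where q1: "qev \<Sigma> F \<sigma> R1 A A1" using t1 by blast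
      obtain A' where "qev \<Sigma> F \<sigma> R2 A1 A'" "u \<in># A'" using y2 c by blast
      then show ?thesis using q1 unfolding qev_QPlus by blast
    qed
  qed
  have N: "(\<exists>A'. qev \<Sigma> F \<sigma> (QPlus R1 R2) A A' \<and> u \<notin># A') \<longleftrightarrow> u \<notin># A \<and> ceval \<Sigma> F \<sigma> (tr \<Sigma> (QPlus R1 R2) w) (FF \<Sigma>)" for A
  proof
    assume "\<exists>A'. qev \<Sigma> F \<sigma> (QPlus R1 R2) A A' \<and> u \<notin># A'"
    then obtain A1 A' where q1: "qev \<Sigma> F \<sigma> R1 A A1" and q2: "qev \<Sigma> F \<sigma> R2 A1 A'" and uA: "u \<notin># A'"
      unfolding qev_QPlus by blast
    have "u \<notin># A1 \<and> ceval \<Sigma> F \<sigma> c2 (FF \<Sigma>)" using n2 q2 uA by blast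
    moreover then have "u \<notin># A \<and> ceval \<Sigma> F \<sigma> c1 (FF \<Sigma>)" using n1 q1 by blast
    ultimately show "u \<notin># A \<and> ceval \<Sigma> F \<sigma> (tr \<Sigma> (QPlus R1 R2) w) (FF \<Sigma>)" using orF by blast
  next
    assume h: "u \<notin># A \<and> ceval \<Sigma> F \<sigma> (tr \<Sigma> (QPlus R1 R2) w) (FF \<Sigma>)"
    then obtain A1 where q1: "qev \<Sigma> F \<sigma> R1 A A1" and "u \<notin># A1" using n1 orF by blast
    then obtain A' where "qev \<Sigma> F \<sigma> R2 A1 A'" "u \<notin># A'" using n2 orF h by blast
    then show "\<exists>A'. qev \<Sigma> F \<sigma> (QPlus R1 R2) A A' \<and> u \<notin># A'" using q1 unfolding qev_QPlus by blast
  qed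
  show ?case using T Y N unfolding u_def by blast
next
  case (QImp \<phi> R)
  have cp: "cclosed (dom \<sigma>) \<phi>" and cr: "qclosed (dom \<sigma>) R"
    and wp: "wf_cond \<Sigma> \<phi>" and wr: "wf_query \<Sigma> R" using QImp.prems(2,3) by simp_all
  note IH = QImp.IH[OF QImp.prems(1) cr wr]
  note t = IH[THEN conjunct1] and y = IH[THEN conjunct2, THEN conjunct1] and n = IH[THEN conjunct2, THEN conjunct2]
  define u where "u = canon \<Sigma> w"
  define c where "c = tr \<Sigma> R w"
  define X where "X = COr (CNot \<phi>) (CNot c)"
  note y = y[folded u_def c_def] and n = n[folded u_def c_def]
  have tc: "ceval \<Sigma> F \<sigma> c (TT \<Sigma>) \<or> ceval \<Sigma> F \<sigma> c (FF \<Sigma>)"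
    unfolding c_def by (rule tot_from[OF t IH[THEN conjunct2, THEN conjunct1] IH[THEN conjunct2, THEN conjunct2]])
  have ccl: "cclosed (dom \<sigma>) c" unfolding c_def by (rule tr_closed[OF cr gw])
  have cwf: "wf_cond \<Sigma> c" unfolding c_def by (rule tr_wf[OF v sw wr])
  note gp = cond_good[OF v QImp.prems(1) cp wp, of F]
  note gc = cond_good[OF v QImp.prems(1) ccl cwf, of F]
  note gX = cond_good[OF v QImp.prems(1), of X F]
  have bX: "\<forall>B. ceval \<Sigma> F \<sigma> X B \<longrightarrow> B = TT \<Sigma> \<or> B = FF \<Sigma>"
    using gX cp ccl wp cwf unfolding X_def by simp
  have tp: "ceval \<Sigma> F \<sigma> \<phi> (TT \<Sigma>) \<or> ceval \<Sigma> F \<sigma> \<phi> (FF \<Sigma>)" using gp by blast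
  have ne: "TT \<Sigma> \<noteq> FF \<Sigma>" by (rule vs_TTFF[OF v])
  have nT: "ceval \<Sigma> F \<sigma> (CNot \<phi>) (TT \<Sigma>) \<longleftrightarrow> ceval \<Sigma> F \<sigma> \<phi> (FF \<Sigma>)"
    by (rule ceval_not_TT[OF v]) (use gp in blast)
  have nF: "ceval \<Sigma> F \<sigma> (CNot \<phi>) (FF \<Sigma>) \<longleftrightarrow> ceval \<Sigma> F \<sigma> \<phi> (TT \<Sigma>)"
    by (rule ceval_not_FF[OF v]) (use gp in blast)
  have mT: "ceval \<Sigma> F \<sigma> (CNot c) (TT \<Sigma>) \<longleftrightarrow> ceval \<Sigma> F \<sigma> c (FF \<Sigma>)"
    by (rule ceval_not_TT[OF v]) (use gc in blast)
  have mF: "ceval \<Sigma> F \<sigma> (CNot c) (FF \<Sigma>) \<longleftrightarrow> ceval \<Sigma> F \<sigma> c (TT \<Sigma>)"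
    by (rule ceval_not_FF[OF v]) (use gc in blast)
  have XF: "ceval \<Sigma> F \<sigma> X (FF \<Sigma>) \<longleftrightarrow> ceval \<Sigma> F \<sigma> c (TT \<Sigma>) \<and> ceval \<Sigma> F \<sigma> \<phi> (TT \<Sigma>)"
    unfolding X_def ceval_or_FF[OF ne] nF mF by blast
  have XT: "ceval \<Sigma> F \<sigma> X (TT \<Sigma>) \<longleftrightarrow> ceval \<Sigma> F \<sigma> c (FF \<Sigma>) \<or> (ceval \<Sigma> F \<sigma> c (TT \<Sigma>) \<and> ceval \<Sigma> F \<sigma> \<phi> (FF \<Sigma>))"
  proof -
    have XT0: "ceval \<Sigma> F \<sigma> X (TT \<Sigma>) \<longleftrightarrow> ceval \<Sigma> F \<sigma> (CNot c) (TT \<Sigma>) \<or> (ceval \<Sigma> F \<sigma> (CNot c) (FF \<Sigma>) \<and> ceval \<Sigma> F \<sigma> (CNot \<phi>) (TT \<Sigma>))"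
      unfolding X_def ceval_COr by auto
    show ?thesis using XT0 unfolding mT mF nT .
  qed
  have TT_: "ceval \<Sigma> F \<sigma> (tr \<Sigma> (QImp \<phi> R) w) (TT \<Sigma>) \<longleftrightarrow> ceval \<Sigma> F \<sigma> c (TT \<Sigma>) \<and> ceval \<Sigma> F \<sigma> \<phi> (TT \<Sigma>)"
    using ceval_not_TT[OF v bX] XF unfolding X_def c_def by simp
  have FF_: "ceval \<Sigma> F \<sigma> (tr \<Sigma> (QImp \<phi> R) w) (FF \<Sigma>) \<longleftrightarrow> ceval \<Sigma> F \<sigma> c (FF \<Sigma>) \<or> (ceval \<Sigma> F \<sigma> c (TT \<Sigma>) \<and> ceval \<Sigma> F \<sigma> \<phi> (FF \<Sigma>))"
    using ceval_not_FF[OF v bX] XT unfolding X_def c_def by simp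
  have T: "\<exists>A'. qev \<Sigma> F \<sigma> (QImp \<phi> R) A A'" for A
    using tp t unfolding qev_QImp by blast
  have Y0: "(\<exists>A'. qev \<Sigma> F \<sigma> (QImp \<phi> R) A A' \<and> u \<in># A') \<longleftrightarrow>
     (ceval \<Sigma> F \<sigma> \<phi> (TT \<Sigma>) \<and> (\<exists>A'. qev \<Sigma> F \<sigma> R A A' \<and> u \<in># A')) \<or> (ceval \<Sigma> F \<sigma> \<phi> (FF \<Sigma>) \<and> u \<in># A)" for A
    unfolding qev_QImp by auto
  have N0: "(\<exists>A'. qev \<Sigma> F \<sigma> (QImp \<phi> R) A A' \<and> u \<notin># A') \<longleftrightarrow>
     (ceval \<Sigma> F \<sigma> \<phi> (TT \<Sigma>) \<and> (\<exists>A'. qev \<Sigma> F \<sigma> R A A' \<and> u \<notin># A')) \<or> (ceval \<Sigma> F \<sigma> \<phi> (FF \<Sigma>) \<and> u \<notin># A)" for A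
    unfolding qev_QImp by auto
  have Y: "(\<exists>A'. qev \<Sigma> F \<sigma> (QImp \<phi> R) A A' \<and> u \<in># A') \<longleftrightarrow> u \<in># A \<or> ceval \<Sigma> F \<sigma> (tr \<Sigma> (QImp \<phi> R) w) (TT \<Sigma>)" for A
    unfolding Y0 TT_ using y[rule_format, of A] tp by blast
  have N: "(\<exists>A'. qev \<Sigma> F \<sigma> (QImp \<phi> R) A A' \<and> u \<notin># A') \<longleftrightarrow> u \<notin># A \<and> ceval \<Sigma> F \<sigma> (tr \<Sigma> (QImp \<phi> R) w) (FF \<Sigma>)" for A
    unfolding N0 FF_ using n[rule_format, of A] tp tc by blast
  show ?case using T Y N unfolding u_def by blast
next
  case (QFrom P R)
  have wp: "wf_pat \<Sigma> P" and cr: "qclosed (dom \<sigma> \<union> pvars P) R" and wr: "wf_query \<Sigma> R"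
    using QFrom.prems(2,3) by simp_all
  define u where "u = canon \<Sigma> w"
  define c where "c = tr \<Sigma> R w"
  have HR: "(\<forall>A. \<exists>A'. qev \<Sigma> F (\<sigma> ++ \<beta>) R A A') \<and>
    (\<forall>A. (\<exists>A'. qev \<Sigma> F (\<sigma> ++ \<beta>) R A A' \<and> u \<in># A') \<longleftrightarrow> u \<in># A \<or> ceval \<Sigma> F (\<sigma> ++ \<beta>) c (TT \<Sigma>)) \<and>
    (\<forall>A. (\<exists>A'. qev \<Sigma> F (\<sigma> ++ \<beta>) R A A' \<and> u \<notin># A') \<longleftrightarrow> u \<notin># A \<and> ceval \<Sigma> F (\<sigma> ++ \<beta>) c (FF \<Sigma>))"
    if m: "match_ext \<Sigma> \<sigma> P \<beta>" for \<beta>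
  proof -
    note gd = gsub_ext[OF QFrom.prems(1) m]
    have g: "gsub \<Sigma> (\<sigma> ++ \<beta>) (dom (\<sigma> ++ \<beta>))" by (rule conjunct1[OF gd])
    have d: "dom (\<sigma> ++ \<beta>) = dom \<sigma> \<union> pvars P" by (rule conjunct2[OF gd])
    have cl: "qclosed (dom (\<sigma> ++ \<beta>)) R" unfolding d by (rule cr)
    show ?thesis using QFrom.IH[OF g cl wr] unfolding u_def c_def .
  qed
  have tcb: "ceval \<Sigma> F (\<sigma> ++ \<beta>) c (TT \<Sigma>) \<or> ceval \<Sigma> F (\<sigma> ++ \<beta>) c (FF \<Sigma>)"
    if m: "match_ext \<Sigma> \<sigma> P \<beta>" for \<beta>
    by (rule tot_from[OF HR[OF m, THEN conjunct1] HR[OF m, THEN conjunct2, THEN conjunct1]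
          HR[OF m, THEN conjunct2, THEN conjunct2]])
  have ne: "TT \<Sigma> \<noteq> FF \<Sigma>" by (rule vs_TTFF[OF v])
  have main: "(\<forall>A. \<exists>A'. qfr \<Sigma> F F' \<sigma> P R A A') \<and>
    (\<forall>A. (\<exists>A'. qfr \<Sigma> F F' \<sigma> P R A A' \<and> u \<in># A') \<longleftrightarrow> u \<in># A \<or> exeval \<Sigma> F F' \<sigma> P c (TT \<Sigma>)) \<and>
    (\<forall>A. (\<exists>A'. qfr \<Sigma> F F' \<sigma> P R A A' \<and> u \<notin># A') \<longleftrightarrow> u \<notin># A \<and> exeval \<Sigma> F F' \<sigma> P c (FF \<Sigma>))" for F'
  proof (induction F' rule: measure_induct_rule[of size])
    case (less F')
    show ?case
    proof (cases "has_match \<Sigma> F' \<sigma> P")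
      case False
      show ?thesis unfolding qfr_nomatch[OF False] exeval_nomatch[OF False] using ne by auto
    next
      case hm: True
      then obtain \<beta>0 F0 where m0: "match_ext \<Sigma> \<sigma> P \<beta>0" "F' = F0 + inst \<Sigma> (\<sigma> ++ \<beta>0) (pbang P + pquery P)"
        unfolding has_match_def by blast
      have HF: "(\<forall>A. \<exists>A'. qfr \<Sigma> F (F'' + inst \<Sigma> (\<sigma> ++ \<beta>) (pbang P)) \<sigma> P R A A') \<and>
        (\<forall>A. (\<exists>A'. qfr \<Sigma> F (F'' + inst \<Sigma> (\<sigma> ++ \<beta>) (pbang P)) \<sigma> P R A A' \<and> u \<in># A') \<longleftrightarrow> u \<in># A \<or> exeval \<Sigma> F (F'' + inst \<Sigma> (\<sigma> ++ \<beta>) (pbang P)) \<sigma> P c (TT \<Sigma>)) \<and>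
        (\<forall>A. (\<exists>A'. qfr \<Sigma> F (F'' + inst \<Sigma> (\<sigma> ++ \<beta>) (pbang P)) \<sigma> P R A A' \<and> u \<notin># A') \<longleftrightarrow> u \<notin># A \<and> exeval \<Sigma> F (F'' + inst \<Sigma> (\<sigma> ++ \<beta>) (pbang P)) \<sigma> P c (FF \<Sigma>))"
        if "F' = F'' + inst \<Sigma> (\<sigma> ++ \<beta>) (pbang P + pquery P)" for \<beta> F''
        by (rule less[OF size_dec[OF wp that]])
      have T: "\<exists>A'. qfr \<Sigma> F F' \<sigma> P R A A'" for A
      proof -
        obtain A1 where q1: "qev \<Sigma> F (\<sigma> ++ \<beta>0) R A A1" using HR[OF m0(1)] by blast
        obtain A' where q2: "qfr \<Sigma> F (F0 + inst \<Sigma> (\<sigma> ++ \<beta>0) (pbang P)) \<sigma> P R A1 A'"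
          using HF[OF m0(2)] by blast
        show ?thesis using qfr_intro[OF m0 q1 q2] by blast
      qed
      have Y: "(\<exists>A'. qfr \<Sigma> F F' \<sigma> P R A A' \<and> u \<in># A') \<longleftrightarrow> u \<in># A \<or> exeval \<Sigma> F F' \<sigma> P c (TT \<Sigma>)" for A
      proof
        assume "\<exists>A'. qfr \<Sigma> F F' \<sigma> P R A A' \<and> u \<in># A'"
        then obtain A' where q: "qfr \<Sigma> F F' \<sigma> P R A A'" and uA: "u \<in># A'" by blast
        obtain \<beta> F'' A1 where m: "match_ext \<Sigma> \<sigma> P \<beta>" "F' = F'' + inst \<Sigma> (\<sigma> ++ \<beta>) (pbang P + pquery P)"
          and q1: "qev \<Sigma> F (\<sigma> ++ \<beta>) R A A1" and q2: "qfr \<Sigma> F (F'' + inst \<Sigma> (\<sigma> ++ \<beta>) (pbang P)) \<sigma> P R A1 A'"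
          by (rule qfr_elim[OF q hm])
        have "u \<in># A1 \<or> exeval \<Sigma> F (F'' + inst \<Sigma> (\<sigma> ++ \<beta>) (pbang P)) \<sigma> P c (TT \<Sigma>)"
          using HF[OF m(2)] q2 uA by blast
        then show "u \<in># A \<or> exeval \<Sigma> F F' \<sigma> P c (TT \<Sigma>)"
        proof
          assume "u \<in># A1"
          then have "u \<in># A \<or> ceval \<Sigma> F (\<sigma> ++ \<beta>) c (TT \<Sigma>)" using HR[OF m(1)] q1 by blast
          then show ?thesis using exeval_intro_TT[OF m] by blast
        next
          assume e: "exeval \<Sigma> F (F'' + inst \<Sigma> (\<sigma> ++ \<beta>) (pbang P)) \<sigma> P c (TT \<Sigma>)"
          show ?thesis using tcb[OF m(1)] exeval_intro_TT[OF m] exeval_intro_FF[OF m _ e] by blast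
        qed
      next
        assume "u \<in># A \<or> exeval \<Sigma> F F' \<sigma> P c (TT \<Sigma>)"
        then show "\<exists>A'. qfr \<Sigma> F F' \<sigma> P R A A' \<and> u \<in># A'"
        proof
          assume uA: "u \<in># A"
          obtain A1 where q1: "qev \<Sigma> F (\<sigma> ++ \<beta>0) R A A1" and "u \<in># A1" using HR[OF m0(1)] uA by blast
          then obtain A' where q2: "qfr \<Sigma> F (F0 + inst \<Sigma> (\<sigma> ++ \<beta>0) (pbang P)) \<sigma> P R A1 A'" and "u \<in># A'"
            using HF[OF m0(2)] by blast
          then show ?thesis using qfr_intro[OF m0 q1 q2] by blast
        next
          assume e: "exeval \<Sigma> F F' \<sigma> P c (TT \<Sigma>)"
          obtain \<beta> F'' B1 where m: "match_ext \<Sigma> \<sigma> P \<beta>" "F' = F'' + inst \<Sigma> (\<sigma> ++ \<beta>) (pbang P + pquery P)"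
            and cb: "ceval \<Sigma> F (\<sigma> ++ \<beta>) c B1"
            and alt: "B1 = TT \<Sigma> \<and> TT \<Sigma> = TT \<Sigma> \<or> B1 = FF \<Sigma> \<and> exeval \<Sigma> F (F'' + inst \<Sigma> (\<sigma> ++ \<beta>) (pbang P)) \<sigma> P c (TT \<Sigma>)"
            by (rule exeval_elim[OF e hm])
          from alt show ?thesis
          proof
            assume "B1 = TT \<Sigma> \<and> TT \<Sigma> = TT \<Sigma>"
            then have "ceval \<Sigma> F (\<sigma> ++ \<beta>) c (TT \<Sigma>)" using cb by simp
            then obtain A1 where q1: "qev \<Sigma> F (\<sigma> ++ \<beta>) R A A1" and "u \<in># A1" using HR[OF m(1)] by blast
            then obtain A' where q2: "qfr \<Sigma> F (F'' + inst \<Sigma> (\<sigma> ++ \<beta>) (pbang P)) \<sigma> P R A1 A'" and "u \<in># A'"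
              using HF[OF m(2)] by blast
            then show ?thesis using qfr_intro[OF m q1 q2] by blast
          next
            assume "B1 = FF \<Sigma> \<and> exeval \<Sigma> F (F'' + inst \<Sigma> (\<sigma> ++ \<beta>) (pbang P)) \<sigma> P c (TT \<Sigma>)"
            then have e: "exeval \<Sigma> F (F'' + inst \<Sigma> (\<sigma> ++ \<beta>) (pbang P)) \<sigma> P c (TT \<Sigma>)" by blast
            obtain A1 where q1: "qev \<Sigma> F (\<sigma> ++ \<beta>) R A A1" using HR[OF m(1)] by blast
            then obtain A' where q2: "qfr \<Sigma> F (F'' + inst \<Sigma> (\<sigma> ++ \<beta>) (pbang P)) \<sigma> P R A1 A'" and "u \<in># A'"
              using HF[OF m(2)] e by blast
            then show ?thesis using qfr_intro[OF m q1 q2] by blast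
          qed
        qed
      qed
      have N: "(\<exists>A'. qfr \<Sigma> F F' \<sigma> P R A A' \<and> u \<notin># A') \<longleftrightarrow> u \<notin># A \<and> exeval \<Sigma> F F' \<sigma> P c (FF \<Sigma>)" for A
      proof
        assume "\<exists>A'. qfr \<Sigma> F F' \<sigma> P R A A' \<and> u \<notin># A'"
        then obtain A' where q: "qfr \<Sigma> F F' \<sigma> P R A A'" and uA: "u \<notin># A'" by blast
        obtain \<beta> F'' A1 where m: "match_ext \<Sigma> \<sigma> P \<beta>" "F' = F'' + inst \<Sigma> (\<sigma> ++ \<beta>) (pbang P + pquery P)"
          and q1: "qev \<Sigma> F (\<sigma> ++ \<beta>) R A A1" and q2: "qfr \<Sigma> F (F'' + inst \<Sigma> (\<sigma> ++ \<beta>) (pbang P)) \<sigma> P R A1 A'"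
          by (rule qfr_elim[OF q hm])
        have h2: "u \<notin># A1 \<and> exeval \<Sigma> F (F'' + inst \<Sigma> (\<sigma> ++ \<beta>) (pbang P)) \<sigma> P c (FF \<Sigma>)"
          using HF[OF m(2)] q2 uA by blast
        then have h1: "u \<notin># A \<and> ceval \<Sigma> F (\<sigma> ++ \<beta>) c (FF \<Sigma>)" using HR[OF m(1)] q1 by blast
        show "u \<notin># A \<and> exeval \<Sigma> F F' \<sigma> P c (FF \<Sigma>)"
          using h1 h2 exeval_intro_FF[OF m] by blast
      next
        assume h: "u \<notin># A \<and> exeval \<Sigma> F F' \<sigma> P c (FF \<Sigma>)"
        then have e: "exeval \<Sigma> F F' \<sigma> P c (FF \<Sigma>)" by blast
        obtain \<beta> F'' B1 where m: "match_ext \<Sigma> \<sigma> P \<beta>" "F' = F'' + inst \<Sigma> (\<sigma> ++ \<beta>) (pbang P + pquery P)"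
          and cb: "ceval \<Sigma> F (\<sigma> ++ \<beta>) c B1"
          and alt: "B1 = TT \<Sigma> \<and> FF \<Sigma> = TT \<Sigma> \<or> B1 = FF \<Sigma> \<and> exeval \<Sigma> F (F'' + inst \<Sigma> (\<sigma> ++ \<beta>) (pbang P)) \<sigma> P c (FF \<Sigma>)"
          by (rule exeval_elim[OF e hm])
        have alt2: "B1 = FF \<Sigma> \<and> exeval \<Sigma> F (F'' + inst \<Sigma> (\<sigma> ++ \<beta>) (pbang P)) \<sigma> P c (FF \<Sigma>)"
          using alt ne by metis
        then have "ceval \<Sigma> F (\<sigma> ++ \<beta>) c (FF \<Sigma>)" using cb by simp
        then obtain A1 where q1: "qev \<Sigma> F (\<sigma> ++ \<beta>) R A A1" and "u \<notin># A1" using HR[OF m(1)] h by blast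
        then obtain A' where q2: "qfr \<Sigma> F (F'' + inst \<Sigma> (\<sigma> ++ \<beta>) (pbang P)) \<sigma> P R A1 A'" and "u \<notin># A'"
          using HF[OF m(2)] alt2 by blast
        then show "\<exists>A'. qfr \<Sigma> F F' \<sigma> P R A A' \<and> u \<notin># A'" using qfr_intro[OF m q1 q2] by blast
      qed
      show ?thesis using T Y N by blast
    qed
  qed
  have e1: "qev \<Sigma> F \<sigma> (QFrom P R) A A' \<longleftrightarrow> qfr \<Sigma> F F \<sigma> P R A A'" for A A' by (rule qev_QFrom)
  have e2: "ceval \<Sigma> F \<sigma> (tr \<Sigma> (QFrom P R) w) B \<longleftrightarrow> exeval \<Sigma> F F \<sigma> P c B" for B
    unfolding c_def by (simp add: ceval_CEx)
  show ?case unfolding e1 e2 u_def[symmetric] using main[of F] by blast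
qed

lemma nf_sat: "nf_reach (cst_step \<Sigma>) X (Sat b) \<longleftrightarrow> (cst_step \<Sigma>)\<^sup>*\<^sup>* X (Sat b)"
  unfolding nf_reach_def by (auto elim: cst_step.cases)

lemma nf_ans: "nf_reach (qst_step \<Sigma>) X (Ans A) \<longleftrightarrow> (qst_step \<Sigma>)\<^sup>*\<^sup>* X (Ans A)"
  unfolding nf_reach_def by (auto elim: qst_step.cases)

lemma cst_lift: "(cstep \<Sigma> F)\<^sup>*\<^sup>* S S' \<Longrightarrow> (cst_step \<Sigma>)\<^sup>*\<^sup>* (CSt F S) (CSt F S')"
  by (induction rule: rtranclp_induct) (auto intro: rtranclp.rtrancl_into_rtrancl cst_step.intros)

lemma sat_star: "(cst_step \<Sigma>)\<^sup>*\<^sup>* (Sat B) Y \<Longrightarrow> Y = Sat B"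
  by (erule converse_rtranclpE) (auto elim: cst_step.cases)

lemma cst_sat_gen:
  assumes "(cst_step \<Sigma>)\<^sup>*\<^sup>* X (Sat b)"
  shows "\<forall>S. X = CSt F S \<longrightarrow> (cstep \<Sigma> F)\<^sup>*\<^sup>* S [Res b]"
  using assms
proof (induction rule: converse_rtranclp_induct)
  case base
  then show ?case by simp
next
  case (step X Z)
  show ?case
  proof (intro allI impI)
    fix S assume X: "X = CSt F S"
    have "(\<exists>S'. Z = CSt F S' \<and> cstep \<Sigma> F S S') \<or> (\<exists>B'. S = [Res B'] \<and> Z = Sat B')"
      using step(1) unfolding X by (auto elim: cst_step.cases)
    then show "(cstep \<Sigma> F)\<^sup>*\<^sup>* S [Res b]"
    proof (elim disjE exE conjE)
      fix S' assume Z: "Z = CSt F S'" and st: "cstep \<Sigma> F S S'"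
      have "(cstep \<Sigma> F)\<^sup>*\<^sup>* S' [Res b]" using step(3) Z by blast
      then show ?thesis by (rule converse_rtranclp_into_rtranclp[where r="cstep \<Sigma> F", OF st])
    next
      fix B' assume S: "S = [Res B']" and Z: "Z = Sat B'"
      have "Sat b = Sat B'" using sat_star step(2) Z by metis
      then show ?thesis using S by simp
    qed
  qed
qed

lemma ceval_top: "nf_reach (cst_step \<Sigma>) (init_c \<phi> F) (Sat b) \<longleftrightarrow> ceval \<Sigma> F Map.empty \<phi> b"
proof
  assume "nf_reach (cst_step \<Sigma>) (init_c \<phi> F) (Sat b)"
  then show "ceval \<Sigma> F Map.empty \<phi> b"
    unfolding nf_sat init_c_def ceval_def using cst_sat_gen by blast
next
  assume "ceval \<Sigma> F Map.empty \<phi> b"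
  then have "(cst_step \<Sigma>)\<^sup>*\<^sup>* (CSt F [Ev Map.empty \<phi>]) (CSt F [Res b])"
    unfolding ceval_def by (rule cst_lift)
  moreover have "cst_step \<Sigma> (CSt F [Res b]) (Sat b)" by (rule cst_step.intros(2))
  ultimately show "nf_reach (cst_step \<Sigma>) (init_c \<phi> F) (Sat b)"
    unfolding nf_sat init_c_def by (rule rtranclp.rtrancl_into_rtrancl)
qed

lemma qst_ans_gen:
  assumes "(qst_step \<Sigma>)\<^sup>*\<^sup>* X (Ans A')"
  shows "\<forall>A S. X = QSt F A S \<longrightarrow> (qst_step \<Sigma>)\<^sup>*\<^sup>* X (QSt F A' [])"
  using assms
proof (induction rule: converse_rtranclp_induct)
  case base
  then show ?case by simp
next
  case (step X Z)
  show ?case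
  proof (intro allI impI)
    fix A S assume X: "X = QSt F A S"
    from qstep_from_QSt[OF step(1)[unfolded X]]
    show "(qst_step \<Sigma>)\<^sup>*\<^sup>* X (QSt F A' [])"
    proof
      assume h: "Z = Ans A \<and> S = []"
      then have "Ans A' = Ans A" using ans_star step(2) by metis
      then show ?thesis using h X by simp
    next
      assume "\<exists>A2 S2. Z = QSt F A2 S2"
      then obtain A2 S2 where Z: "Z = QSt F A2 S2" by blast
      have "(qst_step \<Sigma>)\<^sup>*\<^sup>* Z (QSt F A' [])" using step(3) Z by blast
      then show ?thesis using step(1) by (rule converse_rtranclp_into_rtranclp[rotated])
    qed
  qed
qed

lemma qev_top: "nf_reach (qst_step \<Sigma>) (init_q Q F) (Ans A) \<longleftrightarrow> qev \<Sigma> F Map.empty Q {#} A"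
proof
  assume "nf_reach (qst_step \<Sigma>) (init_q Q F) (Ans A)"
  then show "qev \<Sigma> F Map.empty Q {#} A"
    unfolding nf_ans init_q_def qev_def using qst_ans_gen by blast
next
  assume "qev \<Sigma> F Map.empty Q {#} A"
  moreover have "qst_step \<Sigma> (QSt F A []) (Ans A)" by (rule qst_step.q_ans)
  ultimately show "nf_reach (qst_step \<Sigma>) (init_q Q F) (Ans A)"
    unfolding nf_ans init_q_def qev_def by (rule rtranclp.rtrancl_into_rtrancl)
qed

lemma map_upds_nth:
  "length xs = length ts \<Longrightarrow> distinct xs \<Longrightarrow> i < length xs \<Longrightarrow> (\<rho>(xs [\<mapsto>] ts)) (xs ! i) = Some (ts ! i)"
proof (induction xs ts arbitrary: \<rho> i rule: list_induct2)
  case Nil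
  then show ?case by simp
next
  case (Cons x xs t ts)
  show ?case
  proof (cases i)
    case 0
    then show ?thesis using Cons by simp
  next
    case (Suc j)
    then have "xs ! j \<in> set xs" using Cons by simp
    then show ?thesis using Cons Suc by auto
  qed
qed

theorem lemma13:
  fixes \<Sigma> :: "('s,'f,'v) setting" and r :: 'f and ss :: "'s list"
    and Q :: "('f,'v) query" and xs :: "'v list"
  assumes "valid_setting \<Sigma>"
    and "(ss, sFact \<Sigma>) \<in> ranks \<Sigma> r"
    and "wf_query \<Sigma> Q"
    and "distinct xs" and "length xs = length ss"
    and "\<forall>i<length xs. vsort \<Sigma> (xs ! i) = ss ! i"
    and "set xs \<inter> qvars Q = {}"
  shows "\<exists>\<phi>. wf_cond \<Sigma> \<phi> \<and> (qdet \<Sigma> Q \<longrightarrow> cdet \<Sigma> \<phi>) \<and>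
    (\<forall>F \<rho> ts. db \<Sigma> F \<and> gsub \<Sigma> \<rho> (dom \<rho>) \<and> finite (dom \<rho>) \<and> dom \<rho> \<inter> set xs = {} \<and>
       length ts = length ss \<and> (\<forall>i<length ts. ground (ts ! i) \<and> has_sort \<Sigma> (ts ! i) (ss ! i)) \<and>
       qclosed {} (qsubst \<rho> Q) \<longrightarrow>
       cclosed {} (csubst (\<rho>(xs [\<mapsto>] ts)) \<phi>) \<and>
       (nf_reach (cst_step \<Sigma>) (init_c (csubst (\<rho>(xs [\<mapsto>] ts)) \<phi>) F) (Sat (TT \<Sigma>)) \<longleftrightarrow>
          (\<exists>F'. nf_reach (qst_step \<Sigma>) (init_q (qsubst \<rho> Q) F) (Ans (F' + {# canon \<Sigma> (Fn r ts) #})))) \<and>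
       (nf_reach (cst_step \<Sigma>) (init_c (csubst (\<rho>(xs [\<mapsto>] ts)) \<phi>) F) (Sat (FF \<Sigma>)) \<longleftrightarrow>
          (\<exists>F'. canon \<Sigma> (Fn r ts) \<notin># F' \<and> nf_reach (qst_step \<Sigma>) (init_q (qsubst \<rho> Q) F) (Ans F'))))"
proof -
  note v = assms(1)
  define u0 where "u0 = Fn r (map Var xs)"
  define \<phi> where "\<phi> = tr \<Sigma> Q u0"
  have su0: "has_sort \<Sigma> u0 (sFact \<Sigma>)" unfolding u0_def
  proof (rule has_sort.hs_fn[OF assms(2)])
    show "length (map Var xs) = length ss" using assms(5) by simp
    show "\<forall>i<length (map Var xs). has_sort \<Sigma> (map Var xs ! i) (ss ! i)"
      using assms(6) by (auto intro!: has_sort.hs_var simp: vs_refl[OF v])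
    show "leq \<Sigma> (sFact \<Sigma>) (sFact \<Sigma>)" by (rule vs_refl[OF v])
  qed
  have wf: "wf_cond \<Sigma> \<phi>" unfolding \<phi>_def by (rule tr_wf[OF v su0 assms(3)])
  have det: "qdet \<Sigma> Q \<longrightarrow> cdet \<Sigma> \<phi>" unfolding \<phi>_def using tr_det by blast
  have main: "cclosed {} (csubst (\<rho>(xs [\<mapsto>] ts)) \<phi>) \<and>
       (nf_reach (cst_step \<Sigma>) (init_c (csubst (\<rho>(xs [\<mapsto>] ts)) \<phi>) F) (Sat (TT \<Sigma>)) \<longleftrightarrow>
          (\<exists>F'. nf_reach (qst_step \<Sigma>) (init_q (qsubst \<rho> Q) F) (Ans (F' + {# canon \<Sigma> (Fn r ts) #})))) \<and>
       (nf_reach (cst_step \<Sigma>) (init_c (csubst (\<rho>(xs [\<mapsto>] ts)) \<phi>) F) (Sat (FF \<Sigma>)) \<longleftrightarrow>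
          (\<exists>F'. canon \<Sigma> (Fn r ts) \<notin># F' \<and> nf_reach (qst_step \<Sigma>) (init_q (qsubst \<rho> Q) F) (Ans F')))"
    if H: "db \<Sigma> F \<and> gsub \<Sigma> \<rho> (dom \<rho>) \<and> finite (dom \<rho>) \<and> dom \<rho> \<inter> set xs = {} \<and>
       length ts = length ss \<and> (\<forall>i<length ts. ground (ts ! i) \<and> has_sort \<Sigma> (ts ! i) (ss ! i)) \<and>
       qclosed {} (qsubst \<rho> Q)" for F \<rho> ts
  proof -
    have gr: "gsub \<Sigma> \<rho> (dom \<rho>)" and lts: "length ts = length ss"
      and tsp: "\<forall>i<length ts. ground (ts ! i) \<and> has_sort \<Sigma> (ts ! i) (ss ! i)"
      and clQ: "qclosed {} (qsubst \<rho> Q)" using H by blast+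
    define \<rho>' where "\<rho>' = \<rho>(xs [\<mapsto>] ts)"
    define w where "w = Fn r ts"
    define Q0 where "Q0 = qsubst \<rho> Q"
    have lx: "length xs = length ts" using lts assms(5) by simp
    have su: "subst \<rho>' u0 = w" unfolding u0_def w_def
    proof (simp, rule nth_equalityI)
      show "length (map (subst \<rho>' \<circ> Var) xs) = length ts" using lx by simp
      fix i assume "i < length (map (subst \<rho>' \<circ> Var) xs)"
      then have i: "i < length xs" by simp
      show "map (subst \<rho>' \<circ> Var) xs ! i = ts ! i"
        using map_upds_nth[OF lx assms(4) i, of \<rho>] i unfolding \<rho>'_def by simp
    qed
    have qs: "qsubst \<rho>' Q = Q0" unfolding Q0_def
    proof (rule qsubst_cong, intro ballI)
      fix x assume "x \<in> qvars Q"
      then have "x \<notin> set xs" using assms(7) by blast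
      then show "\<rho>' x = \<rho> x" unfolding \<rho>'_def by simp
    qed
    have cs: "csubst \<rho>' \<phi> = tr \<Sigma> Q0 w" unfolding \<phi>_def tr_subst su qs ..
    have gw: "ground w" unfolding w_def using tsp by (auto simp: in_set_conv_nth)
    have sw: "has_sort \<Sigma> w (sFact \<Sigma>)" unfolding w_def
    proof (rule has_sort.hs_fn[OF assms(2)])
      show "length ts = length ss" by (rule lts)
      show "\<forall>i<length ts. has_sort \<Sigma> (ts ! i) (ss ! i)" using tsp by blast
      show "leq \<Sigma> (sFact \<Sigma>) (sFact \<Sigma>)" by (rule vs_refl[OF v])
    qed
    have wq: "wf_query \<Sigma> Q0" unfolding Q0_def
      by (rule wf_query_subst[OF v _ assms(3)]) (use gr in \<open>auto simp: gsub_def\<close>)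
    have g0: "gsub \<Sigma> Map.empty (dom Map.empty)" by (simp add: gsub_def)
    have cl0: "qclosed (dom Map.empty) Q0" using clQ unfolding Q0_def by simp
    note M = q_main[OF v gw sw g0 cl0 wq, of F]
    note y = M[THEN conjunct2, THEN conjunct1, rule_format, of "{#}"]
    note n = M[THEN conjunct2, THEN conjunct2, rule_format, of "{#}"]
    have c1: "cclosed {} (csubst \<rho>' \<phi>)" unfolding cs using tr_closed[OF clQ[folded Q0_def] gw] .
    have c2: "nf_reach (cst_step \<Sigma>) (init_c (csubst \<rho>' \<phi>) F) (Sat (TT \<Sigma>)) \<longleftrightarrow>
          (\<exists>F'. nf_reach (qst_step \<Sigma>) (init_q Q0 F) (Ans (F' + {# canon \<Sigma> w #})))"
    proof -
      have "(\<exists>F'. qev \<Sigma> F Map.empty Q0 {#} (F' + {# canon \<Sigma> w #})) \<longleftrightarrow>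
            (\<exists>A'. qev \<Sigma> F Map.empty Q0 {#} A' \<and> canon \<Sigma> w \<in># A')"
      proof
        assume "\<exists>F'. qev \<Sigma> F Map.empty Q0 {#} (F' + {# canon \<Sigma> w #})"
        then show "\<exists>A'. qev \<Sigma> F Map.empty Q0 {#} A' \<and> canon \<Sigma> w \<in># A'" by auto
      next
        assume "\<exists>A'. qev \<Sigma> F Map.empty Q0 {#} A' \<and> canon \<Sigma> w \<in># A'"
        then obtain A' where q: "qev \<Sigma> F Map.empty Q0 {#} A'" and m: "canon \<Sigma> w \<in># A'" by blast
        have "A' = (A' - {# canon \<Sigma> w #}) + {# canon \<Sigma> w #}" using m by simp
        then show "\<exists>F'. qev \<Sigma> F Map.empty Q0 {#} (F' + {# canon \<Sigma> w #})" using q by metis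
      qed
      then show ?thesis unfolding cs ceval_top qev_top using y by simp
    qed
    have c3: "nf_reach (cst_step \<Sigma>) (init_c (csubst \<rho>' \<phi>) F) (Sat (FF \<Sigma>)) \<longleftrightarrow>
          (\<exists>F'. canon \<Sigma> w \<notin># F' \<and> nf_reach (qst_step \<Sigma>) (init_q Q0 F) (Ans F'))"
      unfolding cs ceval_top qev_top using n by auto
    show ?thesis using c1 c2 c3 unfolding \<rho>'_def w_def Q0_def by (intro conjI)
  qed
  show ?thesis using wf det main by blast
qed

end
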